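(* Let $n\in\mathbb N$. (a) $L^{(n),1}\subseteq\mathcal A_c^{n+1}$, and it is a linear subspace. (b) $L^{(n),1}$ is not a closed subspace of $\mathcal A_c^{n+1}$ with respect to $\|\cdot\|_{a,n+1}$. (c) The norms $\|\cdot\|^{(n)}_1$ and $\|\cdot\|_{a,n+1}$ are not equivalent on $L^{(n),1}$.
   Context: $D^n$ denotes the $n$th distributional derivative on $\mathcal S'$. $L^{(n),1}=\{f\in\mathcal S' : f=D^nF \text{ for some } F\in L^1(\mathbb R)\}$; such $F$ is unique and $\|f\|^{(n)}_1:=\|F\|_1$. $\mathcal B_c$ is the set of continuous functions $F:\mathbb R\to\mathbb R$ having finite limits at $\pm\infty$ with $\lim_{x\to-\infty}F(x)=0$. For $m\in\mathbb N$, $\mathcal A_c^m=\{f\in\mathcal S' : f=D^mF \text{ for some } F\in\mathcal B_c\}$; such $F$ is unique, and $\|f\|_{a,m}:=\|F\|_\infty=\sup_{x}|F(x)|$, making $\mathcal A_c^m$ a Banach space. *)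

theory Defs
  imports "HOL-Analysis.Analysis"
begin

definition schwartz :: "(real \<Rightarrow> real) set" where
  "schwartz = {\<phi>. (\<forall>k x. ((deriv ^^ k) \<phi>) differentiable (at x)) \<and>
      (\<forall>k m. bounded (range (\<lambda>x. \<bar>x\<bar> ^ m * (deriv ^^ k) \<phi> x)))}"

text \<open>Tempered distributions are represented as functionals on test functions,
  normalised to 0 outside the Schwartz class. distD n F is the n-th distributional
  derivative of the (locally integrable, tempered) function F:
  test function phi is mapped to (-1)^n times the integral of F times phi^(n).\<close>
definition distD :: "nat \<Rightarrow> (real \<Rightarrow> real) \<Rightarrow> ((real \<Rightarrow> real) \<Rightarrow> real)" where
  "distD n F = (\<lambda>\<phi>. if \<phi> \<in> schwartz
      then (-1) ^ n * (\<integral>x. F x * (deriv ^^ n) \<phi> x \<partial>lborel) else 0)"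

definition L1n :: "nat \<Rightarrow> ((real \<Rightarrow> real) \<Rightarrow> real) set" where
  "L1n n = {f. \<exists>F. integrable lborel F \<and> f = distD n F}"

definition norm_L1n :: "nat \<Rightarrow> ((real \<Rightarrow> real) \<Rightarrow> real) \<Rightarrow> real" where
  "norm_L1n n f = (let F = (SOME F. integrable lborel F \<and> f = distD n F)
                   in \<integral>x. \<bar>F x\<bar> \<partial>lborel)"

definition Bc :: "(real \<Rightarrow> real) set" where
  "Bc = {F. continuous_on UNIV F \<and> (\<exists>l. (F \<longlongrightarrow> l) at_top) \<and> (F \<longlongrightarrow> 0) at_bot}"

definition Ac :: "nat \<Rightarrow> ((real \<Rightarrow> real) \<Rightarrow> real) set" where
  "Ac m = {f. \<exists>F\<in>Bc. f = distD m F}"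

definition norm_Ac :: "nat \<Rightarrow> ((real \<Rightarrow> real) \<Rightarrow> real) \<Rightarrow> real" where
  "norm_Ac m f = (let F = (SOME F. F \<in> Bc \<and> f = distD m F) in SUP x. \<bar>F x\<bar>)"

end

theory Submission
  imports Defs "HOL-Probability.Sinc_Integral" "HOL-Computational_Algebra.Polynomial" "HOL-Analysis.Summation_Tests"
begin



lemma sch_DERIV:
  assumes "\<phi> \<in> schwartz"
  shows "((deriv ^^ k) \<phi> has_real_derivative (deriv ^^ Suc k) \<phi> x) (at x)"
proof -
  have "((deriv ^^ k) \<phi>) differentiable (at x)" using assms by (auto simp: schwartz_def)
  then show ?thesis by (simp add: DERIV_deriv_iff_real_differentiable)
qed

lemma sch_cont: "\<phi> \<in> schwartz \<Longrightarrow> isCont ((deriv ^^ k) \<phi>) x"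
  using sch_DERIV DERIV_isCont by blast

lemma sch_cont_on: "\<phi> \<in> schwartz \<Longrightarrow> continuous_on UNIV ((deriv ^^ k) \<phi>)"
  by (simp add: continuous_at_imp_continuous_on sch_cont)

lemma sch_meas[measurable]: "\<phi> \<in> schwartz \<Longrightarrow> (deriv ^^ k) \<phi> \<in> borel_measurable borel"
  by (simp add: borel_measurable_continuous_onI sch_cont_on)

lemma sch_bound:
  assumes "\<phi> \<in> schwartz"
  shows "\<exists>B. \<forall>x. \<bar>x\<bar> ^ m * \<bar>(deriv ^^ k) \<phi> x\<bar> \<le> B"
proof -
  have "bounded (range (\<lambda>x. \<bar>x\<bar> ^ m * (deriv ^^ k) \<phi> x))" using assms by (auto simp: schwartz_def)
  then obtain B where "\<forall>y\<in>range (\<lambda>x. \<bar>x\<bar> ^ m * (deriv ^^ k) \<phi> x). norm y \<le> B"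
    by (auto simp: bounded_iff)
  then show ?thesis by (auto simp: abs_mult)
qed

lemma sch_decay:
  assumes "\<phi> \<in> schwartz"
  shows "\<exists>C. \<forall>x. \<bar>(deriv ^^ k) \<phi> x\<bar> \<le> C * inverse (1 + x^2)"
proof -
  obtain B0 where B0: "\<forall>x. \<bar>x\<bar> ^ 0 * \<bar>(deriv ^^ k) \<phi> x\<bar> \<le> B0" using sch_bound[OF assms] by blast
  obtain B2 where B2: "\<forall>x. \<bar>x\<bar> ^ 2 * \<bar>(deriv ^^ k) \<phi> x\<bar> \<le> B2" using sch_bound[OF assms] by blast
  show ?thesis
  proof (intro exI allI)
    fix x
    have "(1 + x^2) * \<bar>(deriv ^^ k) \<phi> x\<bar> \<le> B0 + B2" using B0[rule_format, of x] B2[rule_format, of x]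
      by (simp add: algebra_simps)
    moreover have "0 < 1 + x^2" by (simp add: add_pos_nonneg)
    ultimately show "\<bar>(deriv ^^ k) \<phi> x\<bar> \<le> (B0 + B2) * inverse (1 + x^2)"
      by (simp add: field_simps)
  qed
qed

lemma integrable_inv1sq: "integrable lborel (\<lambda>x::real. inverse (1 + x^2))"
  using integrable_inverse_1_plus_square by (simp add: set_integrable_def)

lemma sch_integrable_mult:
  assumes "\<phi> \<in> schwartz" and H[measurable]: "H \<in> borel_measurable borel" and HB: "\<And>x. \<bar>H x\<bar> \<le> B"
  shows "integrable lborel (\<lambda>x. H x * (deriv ^^ k) \<phi> x)"
proof -
  obtain C where C: "\<forall>x. \<bar>(deriv ^^ k) \<phi> x\<bar> \<le> C * inverse (1 + x^2)" using sch_decay[OF assms(1)] by blast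
  show ?thesis
  proof (rule Bochner_Integration.integrable_bound[of _ "\<lambda>x. (B * C) * inverse (1 + x^2)"])
    show "integrable lborel (\<lambda>x. (B * C) * inverse (1 + x^2))" using integrable_inv1sq by simp
    show "(\<lambda>x. H x * (deriv ^^ k) \<phi> x) \<in> borel_measurable lborel" using assms(1) by measurable
    show "AE x in lborel. norm (H x * (deriv ^^ k) \<phi> x) \<le> norm (B * C * inverse (1 + x\<^sup>2))"
    proof (rule AE_I2)
      fix x
      have "0 \<le> B" using HB[of x] by linarith
      have "\<bar>H x\<bar> * \<bar>(deriv ^^ k) \<phi> x\<bar> \<le> B * (C * inverse (1 + x^2))"
        by (intro mult_mono HB C[rule_format]) (auto simp: \<open>0\<le>B\<close>)
      moreover have "0 \<le> C" using C[rule_format, of 0] by simp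
      ultimately show "norm (H x * (deriv ^^ k) \<phi> x) \<le> norm (B * C * inverse (1 + x\<^sup>2))"
        using \<open>0\<le>B\<close> by (simp add: abs_mult mult.assoc)
    qed
  qed
qed

lemma sch_integrable: "\<phi> \<in> schwartz \<Longrightarrow> integrable lborel ((deriv ^^ k) \<phi>)"
  using sch_integrable_mult[of \<phi> "\<lambda>_. 1" 1 k] by simp




lemma schwartzI:
  assumes D: "\<And>k x. ((deriv ^^ k) f has_real_derivative (deriv ^^ Suc k) f x) (at x)"
    and B: "\<And>k m. \<exists>B. \<forall>x. \<bar>x\<bar> ^ m * \<bar>(deriv ^^ k) f x\<bar> \<le> B"
  shows "f \<in> schwartz"
  unfolding schwartz_def
proof (intro CollectI conjI allI)
  fix k x show "(deriv ^^ k) f differentiable at x"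
    using D[of k x] real_differentiable_def by blast
next
  fix k m
  obtain b where "\<forall>x. \<bar>x\<bar> ^ m * \<bar>(deriv ^^ k) f x\<bar> \<le> b" using B by blast
  then show "bounded (range (\<lambda>x. \<bar>x\<bar> ^ m * (deriv ^^ k) f x))"
    unfolding bounded_iff by (intro exI[of _ b]) (auto simp: abs_mult)
qed

lemma pow_le_exp: assumes t: "0 \<le> (t::real)" shows "t ^ d \<le> (real d + 1) ^ d * exp t"
proof (cases "d = 0")
  case True then show ?thesis using t by simp
next
  case False
  have "(1 + t / real d) ^ d \<le> exp t"
    using False t by (intro exp_ge_one_plus_x_over_n_power_n) auto
  moreover have "(t / real d) ^ d \<le> (1 + t / real d) ^ d"
    using t by (intro power_mono) auto
  ultimately have "(t / real d) ^ d \<le> exp t" by linarith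
  then have "t ^ d \<le> real d ^ d * exp t"
    using False by (simp add: power_divide field_simps)
  also have "\<dots> \<le> (real d + 1) ^ d * exp t"
    by (intro mult_right_mono power_mono) auto
  finally show ?thesis .
qed

lemma weight_le: "\<bar>x::real\<bar> \<le> \<bar>y\<bar> + c \<Longrightarrow> 0 \<le> c \<Longrightarrow> \<bar>x\<bar> ^ m \<le> 2 ^ m * (\<bar>y\<bar> ^ m + c ^ m)"
proof -
  assume a: "\<bar>x\<bar> \<le> \<bar>y\<bar> + c" "0 \<le> c"
  have "\<bar>x\<bar> ^ m \<le> (2 * max \<bar>y\<bar> c) ^ m"
    using a by (intro power_mono) auto
  also have "\<dots> = 2 ^ m * (max \<bar>y\<bar> c) ^ m" by (simp add: power_mult_distrib)
  also have "(max \<bar>y\<bar> c) ^ m \<le> \<bar>y\<bar> ^ m + c ^ m"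
    using a by (cases "\<bar>y\<bar> \<le> c") (auto simp: max_def)
  finally show ?thesis by simp
qed

lemma sch_transl_deriv:
  assumes "\<phi> \<in> schwartz"
  shows "(deriv ^^ k) (\<lambda>x. \<phi> (x - h)) = (\<lambda>x. (deriv ^^ k) \<phi> (x - h))"
proof (induction k)
  case 0 then show ?case by simp
next
  case (Suc k)
  have "deriv (\<lambda>x. (deriv ^^ k) \<phi> (x - h)) = (\<lambda>x. (deriv ^^ Suc k) \<phi> (x - h))"
  proof
    fix x
    have "((\<lambda>x. (deriv ^^ k) \<phi> (x - h)) has_real_derivative (deriv ^^ Suc k) \<phi> (x - h) * 1) (at x)"
      by (rule DERIV_chain2[OF sch_DERIV[OF assms]]) (auto intro!: derivative_eq_intros)
    then show "deriv (\<lambda>x. (deriv ^^ k) \<phi> (x - h)) x = (deriv ^^ Suc k) \<phi> (x - h)"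
      by (simp add: DERIV_imp_deriv)
  qed
  then show ?case using Suc by simp
qed

lemma sch_transl:
  assumes "\<phi> \<in> schwartz"
  shows "(\<lambda>x. \<phi> (x - h)) \<in> schwartz"
proof (rule schwartzI)
  fix k x
  have "((\<lambda>x. (deriv ^^ k) \<phi> (x - h)) has_real_derivative (deriv ^^ Suc k) \<phi> (x - h) * 1) (at x)"
    by (rule DERIV_chain2[OF sch_DERIV[OF assms]]) (auto intro!: derivative_eq_intros)
  then show "((deriv ^^ k) (\<lambda>x. \<phi> (x - h)) has_real_derivative (deriv ^^ Suc k) (\<lambda>x. \<phi> (x - h)) x) (at x)"
    unfolding sch_transl_deriv[OF assms] by simp
next
  fix k m
  obtain B0 where B0: "\<forall>x. \<bar>x\<bar> ^ 0 * \<bar>(deriv ^^ k) \<phi> x\<bar> \<le> B0" using sch_bound[OF assms] by blast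
  obtain Bm where Bm: "\<forall>x. \<bar>x\<bar> ^ m * \<bar>(deriv ^^ k) \<phi> x\<bar> \<le> Bm" using sch_bound[OF assms] by blast
  show "\<exists>B. \<forall>x. \<bar>x\<bar> ^ m * \<bar>(deriv ^^ k) (\<lambda>x. \<phi> (x - h)) x\<bar> \<le> B"
  proof (intro exI allI)
    fix x
    let ?y = "x - h"
    have "\<bar>x\<bar> ^ m \<le> 2 ^ m * (\<bar>?y\<bar> ^ m + \<bar>h\<bar> ^ m)" by (intro weight_le) auto
    then have "\<bar>x\<bar> ^ m * \<bar>(deriv ^^ k) \<phi> ?y\<bar> \<le> 2 ^ m * (\<bar>?y\<bar> ^ m + \<bar>h\<bar> ^ m) * \<bar>(deriv ^^ k) \<phi> ?y\<bar>"
      by (intro mult_right_mono) auto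
    also have "\<dots> = 2 ^ m * (\<bar>?y\<bar> ^ m * \<bar>(deriv ^^ k) \<phi> ?y\<bar> + \<bar>h\<bar> ^ m * \<bar>(deriv ^^ k) \<phi> ?y\<bar>)"
      by (simp add: algebra_simps)
    also have "\<dots> \<le> 2 ^ m * (Bm + \<bar>h\<bar> ^ m * B0)"
      using Bm[rule_format, of ?y] B0[rule_format, of ?y]
      by (intro mult_left_mono add_mono mult_left_mono) auto
    finally show "\<bar>x\<bar> ^ m * \<bar>(deriv ^^ k) (\<lambda>x. \<phi> (x - h)) x\<bar> \<le> 2 ^ m * (Bm + \<bar>h\<bar> ^ m * B0)"
      by (simp add: sch_transl_deriv[OF assms])
  qed
qed

lemma sch_lin_deriv:
  assumes "\<phi> \<in> schwartz" "\<psi> \<in> schwartz"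
  shows "(deriv ^^ k) (\<lambda>x. a * \<phi> x + b * \<psi> x) = (\<lambda>x. a * (deriv ^^ k) \<phi> x + b * (deriv ^^ k) \<psi> x)"
proof (induction k)
  case 0 then show ?case by simp
next
  case (Suc k)
  have "deriv (\<lambda>x. a * (deriv ^^ k) \<phi> x + b * (deriv ^^ k) \<psi> x) =
        (\<lambda>x. a * (deriv ^^ Suc k) \<phi> x + b * (deriv ^^ Suc k) \<psi> x)"
  proof
    fix x
    have "((\<lambda>x. a * (deriv ^^ k) \<phi> x + b * (deriv ^^ k) \<psi> x) has_real_derivative
           a * (deriv ^^ Suc k) \<phi> x + b * (deriv ^^ Suc k) \<psi> x) (at x)"
      by (intro DERIV_add DERIV_cmult sch_DERIV assms)
    then show "deriv (\<lambda>x. a * (deriv ^^ k) \<phi> x + b * (deriv ^^ k) \<psi> x) x =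
        a * (deriv ^^ Suc k) \<phi> x + b * (deriv ^^ Suc k) \<psi> x"
      by (simp add: DERIV_imp_deriv)
  qed
  then show ?case using Suc by simp
qed

lemma sch_lin:
  assumes "\<phi> \<in> schwartz" "\<psi> \<in> schwartz"
  shows "(\<lambda>x. a * \<phi> x + b * \<psi> x) \<in> schwartz"
proof (rule schwartzI)
  fix k x
  show "((deriv ^^ k) (\<lambda>x. a * \<phi> x + b * \<psi> x) has_real_derivative
         (deriv ^^ Suc k) (\<lambda>x. a * \<phi> x + b * \<psi> x) x) (at x)"
    unfolding sch_lin_deriv[OF assms]
    by (intro DERIV_add DERIV_cmult sch_DERIV assms)
next
  fix k m
  obtain B1 where B1: "\<forall>x. \<bar>x\<bar> ^ m * \<bar>(deriv ^^ k) \<phi> x\<bar> \<le> B1" using sch_bound[OF assms(1)] by blast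
  obtain B2 where B2: "\<forall>x. \<bar>x\<bar> ^ m * \<bar>(deriv ^^ k) \<psi> x\<bar> \<le> B2" using sch_bound[OF assms(2)] by blast
  show "\<exists>B. \<forall>x. \<bar>x\<bar> ^ m * \<bar>(deriv ^^ k) (\<lambda>x. a * \<phi> x + b * \<psi> x) x\<bar> \<le> B"
  proof (intro exI allI)
    fix x
    have "\<bar>x\<bar> ^ m * \<bar>a * (deriv ^^ k) \<phi> x + b * (deriv ^^ k) \<psi> x\<bar> \<le>
          \<bar>a\<bar> * (\<bar>x\<bar> ^ m * \<bar>(deriv ^^ k) \<phi> x\<bar>) + \<bar>b\<bar> * (\<bar>x\<bar> ^ m * \<bar>(deriv ^^ k) \<psi> x\<bar>)"
    proof -
      have "\<bar>a * (deriv ^^ k) \<phi> x + b * (deriv ^^ k) \<psi> x\<bar> \<le> \<bar>a\<bar> * \<bar>(deriv ^^ k) \<phi> x\<bar> + \<bar>b\<bar> * \<bar>(deriv ^^ k) \<psi> x\<bar>"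
        by (metis abs_mult abs_triangle_ineq)
      then have "\<bar>x\<bar> ^ m * \<bar>a * (deriv ^^ k) \<phi> x + b * (deriv ^^ k) \<psi> x\<bar> \<le> \<bar>x\<bar> ^ m * (\<bar>a\<bar> * \<bar>(deriv ^^ k) \<phi> x\<bar> + \<bar>b\<bar> * \<bar>(deriv ^^ k) \<psi> x\<bar>)"
        by (intro mult_left_mono) auto
      then show ?thesis by (simp add: algebra_simps)
    qed
    also have "\<dots> \<le> \<bar>a\<bar> * B1 + \<bar>b\<bar> * B2"
      using B1 B2 by (intro add_mono mult_left_mono) auto
    finally show "\<bar>x\<bar> ^ m * \<bar>(deriv ^^ k) (\<lambda>x. a * \<phi> x + b * \<psi> x) x\<bar> \<le> \<bar>a\<bar> * B1 + \<bar>b\<bar> * B2"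
      by (simp add: sch_lin_deriv[OF assms])
  qed
qed

lemma sch_diff: "\<phi> \<in> schwartz \<Longrightarrow> \<psi> \<in> schwartz \<Longrightarrow> (\<lambda>x. \<phi> x - \<psi> x) \<in> schwartz"
  using sch_lin[of \<phi> \<psi> 1 "-1"] by simp

lemma sch_diff_deriv: "\<phi> \<in> schwartz \<Longrightarrow> \<psi> \<in> schwartz \<Longrightarrow>
   (deriv ^^ k) (\<lambda>x. \<phi> x - \<psi> x) = (\<lambda>x. (deriv ^^ k) \<phi> x - (deriv ^^ k) \<psi> x)"
  using sch_lin_deriv[of \<phi> \<psi> k 1 "-1"] by simp




lemma abs_le_1_sq: "\<bar>x::real\<bar> \<le> 1 + x\<^sup>2"
proof (cases "\<bar>x\<bar> \<le> 1")
  case True then show ?thesis by (smt (verit) zero_le_power2)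
next
  case False
  then have "\<bar>x\<bar> \<le> \<bar>x\<bar> * \<bar>x\<bar>" by (intro mult_le_cancel_left1[THEN iffD2]) auto
  then show ?thesis by (simp add: power2_eq_square abs_mult_self_eq)
qed

lemma poly_gauss_bound:
  assumes c: "0 < (c::real)"
  shows "\<exists>B. \<forall>x. \<bar>poly q x\<bar> * exp (- c * x\<^sup>2) \<le> B"
proof -
  define d where "d = degree q"
  define K where "K = (\<Sum>i\<le>d. \<bar>coeff q i\<bar>)"
  show ?thesis
  proof (intro exI allI)
    fix x :: real
    have x1: "1 \<le> 1 + x\<^sup>2" by simp
    have "\<bar>poly q x\<bar> \<le> (\<Sum>i\<le>d. \<bar>coeff q i\<bar> * \<bar>x\<bar> ^ i)"
      unfolding poly_altdef d_def
      by (rule order_trans[OF sum_abs]) (simp add: abs_mult power_abs)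
    also have "\<dots> \<le> (\<Sum>i\<le>d. \<bar>coeff q i\<bar> * (1 + x\<^sup>2) ^ d)"
    proof (intro sum_mono mult_left_mono)
      fix i assume "i \<in> {..d}"
      have "\<bar>x\<bar> ^ i \<le> (1 + x\<^sup>2) ^ i" by (intro power_mono abs_le_1_sq) auto
      also have "\<dots> \<le> (1 + x\<^sup>2) ^ d" using \<open>i \<in> {..d}\<close> by (intro power_increasing x1) auto
      finally show "\<bar>x\<bar> ^ i \<le> (1 + x\<^sup>2) ^ d" .
    qed auto
    also have "\<dots> = K * (1 + x\<^sup>2) ^ d" by (simp add: K_def sum_distrib_right)
    finally have 1: "\<bar>poly q x\<bar> \<le> K * (1 + x\<^sup>2) ^ d" .
    have "(c * (1 + x\<^sup>2)) ^ d \<le> (real d + 1) ^ d * exp (c * (1 + x\<^sup>2))"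
      using c by (intro pow_le_exp) auto
    then have 2: "(1 + x\<^sup>2) ^ d \<le> (real d + 1) ^ d * exp (c * (1 + x\<^sup>2)) / c ^ d"
      using c by (simp add: pos_le_divide_eq power_mult_distrib mult.commute)
    have K0: "0 \<le> K" by (simp add: K_def sum_nonneg)
    have "\<bar>poly q x\<bar> * exp (- c * x\<^sup>2) \<le> K * ((real d + 1) ^ d * exp (c * (1 + x\<^sup>2)) / c ^ d) * exp (- c * x\<^sup>2)"
    proof (intro mult_right_mono)
      have "K * (1 + x\<^sup>2) ^ d \<le> K * ((real d + 1) ^ d * exp (c * (1 + x\<^sup>2)) / c ^ d)"
        using 2 K0 by (rule mult_left_mono)
      then show "\<bar>poly q x\<bar> \<le> K * ((real d + 1) ^ d * exp (c * (1 + x\<^sup>2)) / c ^ d)" using 1 by linarith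
    qed auto
    also have "\<dots> = K * (real d + 1) ^ d / c ^ d * (exp (c * (1 + x\<^sup>2)) * exp (- c * x\<^sup>2))"
      by (simp add: field_simps)
    also have "exp (c * (1 + x\<^sup>2)) * exp (- c * x\<^sup>2) = exp c"
      by (simp add: exp_add[symmetric] algebra_simps)
    finally show "\<bar>poly q x\<bar> * exp (- c * x\<^sup>2) \<le> K * (real d + 1) ^ d / c ^ d * exp c" .
  qed
qed

definition gP :: "real \<Rightarrow> nat \<Rightarrow> real poly" where
  "gP c k = ((\<lambda>p. pderiv p + [:0, -2 * c:] * p) ^^ k) 1"

lemma gP_Suc: "gP c (Suc k) = pderiv (gP c k) + [:0, -2 * c:] * gP c k"
  by (simp add: gP_def)

lemma gauss_DERIV:
  "((\<lambda>x. poly p x * exp (- c * x\<^sup>2)) has_real_derivative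
     poly (pderiv p + [:0, -2 * c:] * p) x * exp (- c * x\<^sup>2)) (at x)"
  by (auto intro!: derivative_eq_intros simp: algebra_simps)

lemma gauss_deriv:
  "(deriv ^^ k) (\<lambda>x. exp (- c * x\<^sup>2)) = (\<lambda>x. poly (gP c k) x * exp (- c * x\<^sup>2))"
proof (induction k)
  case 0 then show ?case by (simp add: gP_def)
next
  case (Suc k)
  have "(deriv ^^ Suc k) (\<lambda>x. exp (- c * x\<^sup>2)) = deriv (\<lambda>x. poly (gP c k) x * exp (- c * x\<^sup>2))"
    using Suc by (simp only: funpow.simps comp_def)
  also have "\<dots> = (\<lambda>x. poly (gP c (Suc k)) x * exp (- c * x\<^sup>2))"
    by (rule ext, simp only: gP_Suc, rule DERIV_imp_deriv[OF gauss_DERIV])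
  finally show ?case .
qed

lemma gauss_schwartz:
  assumes c: "0 < c"
  shows "(\<lambda>x. exp (- c * x\<^sup>2)) \<in> schwartz"
proof (rule schwartzI)
  fix k x
  show "((deriv ^^ k) (\<lambda>x. exp (- c * x\<^sup>2)) has_real_derivative (deriv ^^ Suc k) (\<lambda>x. exp (- c * x\<^sup>2)) x) (at x)"
    unfolding gauss_deriv gP_Suc by (rule gauss_DERIV)
next
  fix k m
  obtain B where B: "\<forall>x. \<bar>poly (monom 1 m * gP c k) x\<bar> * exp (- c * x\<^sup>2) \<le> B"
    using poly_gauss_bound[OF c] by blast
  show "\<exists>B. \<forall>x. \<bar>x\<bar> ^ m * \<bar>(deriv ^^ k) (\<lambda>x. exp (- c * x\<^sup>2)) x\<bar> \<le> B"
    unfolding gauss_deriv using B by (intro exI[of _ B]) (auto simp: poly_monom abs_mult power_abs mult.assoc)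
qed




lemma int_ind: "integrable lborel (F::real\<Rightarrow>real) \<Longrightarrow> A \<in> sets borel \<Longrightarrow> integrable lborel (\<lambda>t. indicator A t * F t)"
  using integrable_mult_indicator[of A lborel F] by simp

definition anti :: "(real \<Rightarrow> real) \<Rightarrow> real \<Rightarrow> real" where
  "anti F x = (\<integral>t. indicator {..x} t * F t \<partial>lborel)"

lemma anti_seq:
  assumes F: "integrable lborel F" and X: "X \<longlonglongrightarrow> x"
  shows "(\<lambda>k. anti F (X k)) \<longlonglongrightarrow> anti F x"
  unfolding anti_def
proof (rule integral_dominated_convergence[where w="\<lambda>t. \<bar>F t\<bar>"])
  show "integrable lborel (\<lambda>t. \<bar>F t\<bar>)" using F by auto
  show "(\<lambda>t. indicator {..x} t * F t) \<in> borel_measurable lborel" using F by measurable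
  show "(\<lambda>t. indicator {..X i} t * F t) \<in> borel_measurable lborel" for i using F by measurable
  show "AE t in lborel. norm (indicator {..X i} t * F t) \<le> \<bar>F t\<bar>" for i
    by (auto simp: indicator_def)
  show "AE t in lborel. (\<lambda>i. indicator {..X i} t * F t) \<longlonglongrightarrow> indicator {..x} t * F t"
    using AE_lborel_singleton[of x]
  proof eventually_elim
    fix t :: real assume "t \<noteq> x"
    show "(\<lambda>i. indicator {..X i} t * F t) \<longlonglongrightarrow> indicator {..x} t * F t"
    proof (cases "t < x")
      case True
      then have "eventually (\<lambda>i. t < X i) sequentially" using order_tendstoD(1)[OF X] by blast
      then have "eventually (\<lambda>i. indicator {..X i} t * F t = indicator {..x} t * F t) sequentially"
        by eventually_elim (use True in auto)
      then show ?thesis by (rule tendsto_eventually)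
    next
      case False
      then have "x < t" using \<open>t \<noteq> x\<close> by auto
      then have "eventually (\<lambda>i. X i < t) sequentially" using order_tendstoD(2)[OF X] by blast
      then have "eventually (\<lambda>i. indicator {..X i} t * F t = indicator {..x} t * F t) sequentially"
        by eventually_elim (use \<open>x < t\<close> in auto)
      then show ?thesis by (rule tendsto_eventually)
    qed
  qed
qed

lemma anti_isCont: "integrable lborel F \<Longrightarrow> isCont (anti F) x"
  by (rule continuous_at_sequentiallyI) (rule anti_seq)

lemma anti_cont: "integrable lborel F \<Longrightarrow> continuous_on UNIV (anti F)"
  by (simp add: anti_isCont continuous_at_imp_continuous_on)

lemma anti_meas[measurable]: "integrable lborel F \<Longrightarrow> anti F \<in> borel_measurable borel"
  by (simp add: anti_cont borel_measurable_continuous_onI)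

lemma anti_bot:
  assumes F: "integrable lborel F"
  shows "(anti F \<longlongrightarrow> 0) at_bot"
proof (rule tendsto_at_botI_sequentially)
  fix X :: "nat \<Rightarrow> real" assume X: "filterlim X at_bot sequentially"
  have "(\<lambda>k. \<integral>t. indicator {..X k} t * F t \<partial>lborel) \<longlonglongrightarrow> (\<integral>t. (0::real) \<partial>(lborel::real measure))"
  proof (rule integral_dominated_convergence[where w="\<lambda>t. \<bar>F t\<bar>" and f="\<lambda>t. 0" and s="\<lambda>k t. indicator {..X k} t * F t"])
    show "integrable lborel (\<lambda>t. \<bar>F t\<bar>)" using F by auto
    show "(\<lambda>t. 0::real) \<in> borel_measurable lborel" by simp
    show "(\<lambda>t. indicator {..X i} t * F t) \<in> borel_measurable lborel" for i using F by measurable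
    show "AE t in lborel. norm (indicator {..X i} t * F t) \<le> \<bar>F t\<bar>" for i
      by (auto simp: indicator_def)
    show "AE t in lborel. (\<lambda>i. indicator {..X i} t * F t) \<longlonglongrightarrow> 0"
    proof (rule AE_I2)
      fix t :: real
      have "eventually (\<lambda>i. X i < t) sequentially" using X by (simp add: filterlim_at_bot_dense)
      then have "eventually (\<lambda>i. indicator {..X i} t * F t = 0) sequentially"
        by eventually_elim auto
      then show "(\<lambda>i. indicator {..X i} t * F t) \<longlonglongrightarrow> 0" by (rule tendsto_eventually)
    qed
  qed
  then show "(\<lambda>n. anti F (X n)) \<longlonglongrightarrow> 0" by (simp add: anti_def)
qed

lemma anti_top:
  assumes F: "integrable lborel F"
  shows "(anti F \<longlongrightarrow> (\<integral>t. F t \<partial>lborel)) at_top"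
proof (rule tendsto_at_topI_sequentially)
  fix X :: "nat \<Rightarrow> real" assume X: "filterlim X at_top sequentially"
  have "(\<lambda>k. \<integral>t. indicator {..X k} t * F t \<partial>lborel) \<longlonglongrightarrow> (\<integral>t. F t \<partial>lborel)"
  proof (rule integral_dominated_convergence[where w="\<lambda>t. \<bar>F t\<bar>"])
    show "integrable lborel (\<lambda>t. \<bar>F t\<bar>)" using F by auto
    show "F \<in> borel_measurable lborel" using F by measurable
    show "(\<lambda>t. indicator {..X i} t * F t) \<in> borel_measurable lborel" for i using F by measurable
    show "AE t in lborel. norm (indicator {..X i} t * F t) \<le> \<bar>F t\<bar>" for i
      by (auto simp: indicator_def)
    show "AE t in lborel. (\<lambda>i. indicator {..X i} t * F t) \<longlonglongrightarrow> F t"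
    proof (rule AE_I2)
      fix t :: real
      have "eventually (\<lambda>i. t < X i) sequentially" using X by (simp add: filterlim_at_top_dense)
      then have "eventually (\<lambda>i. indicator {..X i} t * F t = F t) sequentially"
        by eventually_elim auto
      then show "(\<lambda>i. indicator {..X i} t * F t) \<longlonglongrightarrow> F t" by (rule tendsto_eventually)
    qed
  qed
  then show "(\<lambda>n. anti F (X n)) \<longlonglongrightarrow> (\<integral>t. F t \<partial>lborel)" by (simp add: anti_def)
qed

lemma anti_Bc: "integrable lborel F \<Longrightarrow> anti F \<in> Bc"
  unfolding Bc_def using anti_cont anti_bot anti_top by blast

lemma anti_bound: assumes F: "integrable lborel F" shows "\<bar>anti F x\<bar> \<le> (\<integral>t. \<bar>F t\<bar> \<partial>lborel)"
  unfolding anti_def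
  by (rule integral_abs_bound_integral) (use F int_ind[OF F, of "{..x}"] in \<open>auto simp: indicator_def abs_mult\<close>)

lemma anti_diff:
  assumes F: "integrable lborel F" and ab: "a \<le> b"
  shows "anti F b - anti F a = (\<integral>t. indicator {a<..b} t * F t \<partial>lborel)"
proof -
  have "anti F b - anti F a = (\<integral>t. indicator {..b} t * F t - indicator {..a} t * F t \<partial>lborel)"
    unfolding anti_def using F
    by (subst Bochner_Integration.integral_diff) (auto intro: int_ind)
  also have "\<dots> = (\<integral>t. indicator {a<..b} t * F t \<partial>lborel)"
    using ab by (intro Bochner_Integration.integral_cong) (auto simp: indicator_def)
  finally show ?thesis .
qed

lemma anti_DERIV:
  assumes F: "integrable lborel F" and c: "continuous_on UNIV F"
  shows "(anti F has_real_derivative F x) (at x)"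
proof -
  define a where "a = x - 1"
  define b where "b = x + 1"
  have eq: "anti F y = anti F a + (LBINT t=a..y. F t)" if "y \<in> {a..b}" for y
  proof -
    have "a \<le> y" using that by auto
    then have "(LBINT t=a..y. F t) = (\<integral>t. indicator {a<..y} t * F t \<partial>lborel)"
      by (simp add: interval_integral_Ioc set_lebesgue_integral_def)
    then show ?thesis using anti_diff[OF F \<open>a \<le> y\<close>] by simp
  qed
  have "((\<lambda>y. LBINT t=a..y. F t) has_vector_derivative F x) (at x within {a..b})"
    by (rule interval_integral_FTC2) (use c in \<open>auto simp: a_def b_def intro: continuous_on_subset\<close>)
  then have D1: "((\<lambda>y. anti F a + (LBINT t=a..y. F t)) has_vector_derivative F x) (at x within {a..b})"
    by (auto intro!: derivative_eq_intros)
  have "(anti F has_vector_derivative F x) (at x within {a..b})"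
    by (rule has_vector_derivative_transform[OF _ eq D1]) (simp add: a_def b_def)
  moreover have "at x within {a..b} = at x" by (rule at_within_Icc_at) (auto simp: a_def b_def)
  ultimately show ?thesis by (simp add: has_real_derivative_iff_has_vector_derivative)
qed




definition Dl :: "real \<Rightarrow> (real \<Rightarrow> real) \<Rightarrow> real \<Rightarrow> real" where
  "Dl h \<phi> = (\<lambda>y. \<phi> y - \<phi> (y - h))"

definition Tp :: "real \<Rightarrow> (real \<Rightarrow> real) \<Rightarrow> real \<Rightarrow> real" where
  "Tp h \<phi> = (\<lambda>y. anti \<phi> y - anti \<phi> (y - h))"

lemma Dl_sch: "\<phi> \<in> schwartz \<Longrightarrow> Dl h \<phi> \<in> schwartz"
  unfolding Dl_def by (intro sch_diff sch_transl)

lemma Dl_deriv: "\<phi> \<in> schwartz \<Longrightarrow> (deriv ^^ k) (Dl h \<phi>) = Dl h ((deriv ^^ k) \<phi>)"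
  unfolding Dl_def by (simp add: sch_diff_deriv sch_transl sch_transl_deriv)

lemma Tp_DERIV:
  assumes "\<phi> \<in> schwartz"
  shows "(Tp h \<phi> has_real_derivative Dl h \<phi> y) (at y)"
proof -
  have i: "integrable lborel \<phi>" and c: "continuous_on UNIV \<phi>"
    using sch_integrable[OF assms, of 0] sch_cont_on[OF assms, of 0] by auto
  have "((\<lambda>y. anti \<phi> y - anti \<phi> (y - h)) has_real_derivative \<phi> y - \<phi> (y - h) * 1) (at y)"
    by (intro DERIV_diff anti_DERIV[OF i c] DERIV_chain2[OF anti_DERIV[OF i c]])
       (auto intro!: derivative_eq_intros)
  then show ?thesis by (simp add: Tp_def Dl_def)
qed

lemma Tp_deriv1: "\<phi> \<in> schwartz \<Longrightarrow> deriv (Tp h \<phi>) = Dl h \<phi>"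
  using Tp_DERIV DERIV_imp_deriv by blast

lemma funpow_Suc_deriv: "(deriv ^^ Suc k) f = (deriv ^^ k) (deriv f)"
  by (simp add: funpow_Suc_right del: funpow.simps)

lemma Tp_derivSuc: "\<phi> \<in> schwartz \<Longrightarrow> (deriv ^^ Suc k) (Tp h \<phi>) = (deriv ^^ k) (Dl h \<phi>)"
  by (simp only: funpow_Suc_deriv Tp_deriv1)

lemma Tp_sch:
  assumes \<phi>: "\<phi> \<in> schwartz" and h: "0 < h"
  shows "Tp h \<phi> \<in> schwartz"
proof (rule schwartzI)
  fix k x
  show "((deriv ^^ k) (Tp h \<phi>) has_real_derivative (deriv ^^ Suc k) (Tp h \<phi>) x) (at x)"
  proof (cases k)
    case 0 then show ?thesis using Tp_DERIV[OF \<phi>] by (simp add: Tp_deriv1[OF \<phi>])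
  next
    case (Suc j)
    then show ?thesis unfolding Suc Tp_derivSuc[OF \<phi>]
      using sch_DERIV[OF Dl_sch[OF \<phi>]] by (simp add: funpow_Suc_deriv[symmetric] Tp_derivSuc[OF \<phi>] del: funpow.simps)
  qed
next
  fix k m
  show "\<exists>B. \<forall>x. \<bar>x\<bar> ^ m * \<bar>(deriv ^^ k) (Tp h \<phi>) x\<bar> \<le> B"
  proof (cases k)
    case (Suc j)
    then show ?thesis unfolding Suc Tp_derivSuc[OF \<phi>] using sch_bound[OF Dl_sch[OF \<phi>]] by blast
  next
    case 0
    obtain B0 where B0: "\<forall>x. \<bar>x\<bar> ^ 0 * \<bar>(deriv ^^ 0) \<phi> x\<bar> \<le> B0" using sch_bound[OF \<phi>] by blast
    obtain Bm where Bm: "\<forall>x. \<bar>x\<bar> ^ m * \<bar>(deriv ^^ 0) \<phi> x\<bar> \<le> Bm" using sch_bound[OF \<phi>] by blast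
    have i: "integrable lborel \<phi>" using sch_integrable[OF \<phi>, of 0] by simp
    define K where "K = 2 ^ m * (Bm + h ^ m * B0)"
    have "\<bar>x\<bar> ^ m * \<bar>Tp h \<phi> x\<bar> \<le> h * K" for x
    proof -
      have "Tp h \<phi> x = (\<integral>t. indicator {x - h<..x} t * \<phi> t \<partial>lborel)"
        unfolding Tp_def using anti_diff[OF i, of "x - h" x] h by simp
      then have "\<bar>x\<bar> ^ m * \<bar>Tp h \<phi> x\<bar> = \<bar>\<integral>t. \<bar>x\<bar> ^ m * (indicator {x - h<..x} t * \<phi> t) \<partial>lborel\<bar>"
        by (simp add: abs_mult)
      also have "\<dots> \<le> (\<integral>t. K * indicator {x - h<..x} t \<partial>lborel)"
      proof (rule integral_abs_bound_integral)
        show "integrable lborel (\<lambda>t. \<bar>x\<bar> ^ m * (indicator {x - h<..x} t * \<phi> t))"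
          using int_ind[OF i] by auto
        show "integrable lborel (\<lambda>t. K * indicator {x - h<..x} t)"
          using h by (auto intro!: integrable_real_indicator)
        fix t :: real
        show "\<bar>\<bar>x\<bar> ^ m * (indicator {x - h<..x} t * \<phi> t)\<bar> \<le> K * indicator {x - h<..x} t"
        proof (cases "t \<in> {x - h<..x}")
          case True
          then have "\<bar>x\<bar> \<le> \<bar>t\<bar> + h" by auto
          then have w: "\<bar>x\<bar> ^ m \<le> 2 ^ m * (\<bar>t\<bar> ^ m + h ^ m)" using weight_le[of x t h m] h by simp
          have "\<bar>x\<bar> ^ m * \<bar>\<phi> t\<bar> \<le> 2 ^ m * (\<bar>t\<bar> ^ m + h ^ m) * \<bar>\<phi> t\<bar>"
            using w by (intro mult_right_mono) auto
          also have "\<dots> = 2 ^ m * (\<bar>t\<bar> ^ m * \<bar>\<phi> t\<bar> + h ^ m * \<bar>\<phi> t\<bar>)" by (simp add: algebra_simps)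
          also have "\<dots> \<le> K" unfolding K_def
            using Bm[rule_format, of t] B0[rule_format, of t] h
            by (intro mult_left_mono add_mono mult_left_mono) auto
          finally show ?thesis using True by (simp add: abs_mult)
        next
          case False then show ?thesis by simp
        qed
      qed
      also have "\<dots> = K * h" using h by simp
      finally show ?thesis by (simp add: mult.commute)
    qed
    then show ?thesis unfolding 0 by auto
  qed
qed

lemma Tp_pow_sch: "\<phi> \<in> schwartz \<Longrightarrow> 0 < h \<Longrightarrow> (Tp h ^^ m) \<phi> \<in> schwartz"
  by (induction m) (auto intro: Tp_sch)

lemma Dl_pow_sch: "\<phi> \<in> schwartz \<Longrightarrow> (Dl h ^^ m) \<phi> \<in> schwartz"
  by (induction m) (auto intro: Dl_sch)

lemma Tp_pow_deriv:
  assumes "\<phi> \<in> schwartz" "0 < h"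
  shows "(deriv ^^ m) ((Tp h ^^ m) \<phi>) = (Dl h ^^ m) \<phi>"
proof (induction m)
  case 0 then show ?case by simp
next
  case (Suc m)
  have s: "(Tp h ^^ m) \<phi> \<in> schwartz" using Tp_pow_sch assms by blast
  have "(deriv ^^ Suc m) ((Tp h ^^ Suc m) \<phi>) = (deriv ^^ m) (Dl h ((Tp h ^^ m) \<phi>))"
    using Tp_derivSuc[OF s] by simp
  also have "\<dots> = Dl h ((deriv ^^ m) ((Tp h ^^ m) \<phi>))" by (rule Dl_deriv[OF s])
  finally show ?case using Suc by simp
qed




definition nab :: "real \<Rightarrow> (real \<Rightarrow> real) \<Rightarrow> real \<Rightarrow> real" where
  "nab h u = (\<lambda>a. u a - u (a + h))"

lemma fd_core:
  assumes B: "\<And>a. \<bar>w a\<bar> \<le> B" and Z: "\<And>a. nab h (nab h w) a = 0"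
  shows "nab h w a = 0"
proof -
  define d where "d = nab h w"
  have dsh: "d (b + h) = d b" for b using Z[of b] by (simp add: d_def nab_def)
  have dn: "d (a + real n * h) = d a" for n
    by (induction n) (auto simp: algebra_simps dsh[of "a + real _ * h", simplified algebra_simps])
  have wn: "w a - w (a + real n * h) = real n * d a" for n
  proof (induction n)
    case 0 then show ?case by simp
  next
    case (Suc n)
    have "w a - w (a + real (Suc n) * h) = (w a - w (a + real n * h)) + d (a + real n * h)"
      by (simp add: d_def nab_def algebra_simps)
    then show ?case using Suc dn by (simp add: algebra_simps)
  qed
  show ?thesis
  proof (rule ccontr)
    assume ne: "nab h w a \<noteq> 0"
    then have pos: "0 < \<bar>d a\<bar>" by (simp add: d_def)
    obtain n :: nat where n: "2 * B / \<bar>d a\<bar> < real n" using reals_Archimedean2 by blast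
    have "real n * \<bar>d a\<bar> = \<bar>w a - w (a + real n * h)\<bar>" using wn[of n] by (simp add: abs_mult)
    also have "\<dots> \<le> 2 * B" using B[of a] B[of "a + real n * h"] by linarith
    finally have "real n \<le> 2 * B / \<bar>d a\<bar>" using pos by (simp add: field_simps)
    then show False using n by linarith
  qed
qed

lemma fd:
  assumes "\<And>a. \<bar>w a\<bar> \<le> B" and "\<And>a. (nab h ^^ Suc j) w a = 0"
  shows "nab h w a = 0"
  using assms
proof (induction j arbitrary: w B a)
  case 0 then show ?case by simp
next
  case (Suc j)
  have b2: "\<bar>nab h w b\<bar> \<le> 2 * B" for b using Suc.prems(1)[of b] Suc.prems(1)[of "b + h"]
    by (simp add: nab_def)
  have z: "(nab h ^^ Suc j) (nab h w) b = 0" for b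
    using Suc.prems(2)[of b] by (simp add: funpow_Suc_right del: funpow.simps)
  have "nab h (nab h w) b = 0" for b using Suc.IH[of "nab h w" "2 * B" b, OF b2 z] by blast
  then show ?case using fd_core[of w B h a] Suc.prems(1) by blast
qed




lemma uniq:
  fixes H :: "real \<Rightarrow> real"
  assumes Hc: "continuous_on UNIV H" and HB: "\<And>x. \<bar>H x\<bar> \<le> B"
    and Hbot: "(H \<longlongrightarrow> 0) at_bot"
    and Z: "\<And>\<phi>. \<phi> \<in> schwartz \<Longrightarrow> (\<integral>x. H x * (deriv ^^ m) \<phi> x \<partial>lborel) = 0"
  shows "H x0 = 0"
proof -
  have Hm[measurable]: "H \<in> borel_measurable borel" using Hc by (rule borel_measurable_continuous_onI)
  define V where "V \<psi> a = (\<integral>y. H y * \<psi> (y - a) \<partial>lborel)" for \<psi> a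
  have Vint: "integrable lborel (\<lambda>y. H y * \<psi> (y - a))" if "\<psi> \<in> schwartz" for \<psi> a
    using sch_integrable_mult[OF sch_transl[OF that, of a] Hm HB, of 0] by simp
  have VDl: "V (Dl h \<psi>) = nab h (V \<psi>)" if "\<psi> \<in> schwartz" for \<psi> h
  proof
    fix a
    have "V (Dl h \<psi>) a = (\<integral>y. H y * \<psi> (y - a) - H y * \<psi> (y - (a + h)) \<partial>lborel)"
      unfolding V_def Dl_def by (simp add: algebra_simps diff_diff_eq)
    also have "\<dots> = V \<psi> a - V \<psi> (a + h)"
      unfolding V_def by (rule Bochner_Integration.integral_diff) (use Vint[OF that] in auto)
    finally show "V (Dl h \<psi>) a = nab h (V \<psi>) a" by (simp add: nab_def)
  qed
  have VDlpow: "V ((Dl h ^^ j) \<psi>) = (nab h ^^ j) (V \<psi>)" if "\<psi> \<in> schwartz" for \<psi> h j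
  proof (induction j)
    case 0 then show ?case by simp
  next
    case (Suc j)
    have "V ((Dl h ^^ Suc j) \<psi>) = V (Dl h ((Dl h ^^ j) \<psi>))" by simp
    also have "\<dots> = nab h (V ((Dl h ^^ j) \<psi>))" by (rule VDl[OF Dl_pow_sch[OF that]])
    finally show ?case using Suc by simp
  qed
  have key: "(\<integral>s. H (a + s) * exp (- c * s\<^sup>2) \<partial>lborel) = 0" if c: "0 < c" for c a
  proof -
    define \<rho> where "\<rho> = (\<lambda>t::real. exp (- c * t\<^sup>2))"
    have \<rho>: "\<rho> \<in> schwartz" unfolding \<rho>_def using gauss_schwartz[OF c] .
    define u where "u = V \<rho>"
    have uaff: "u b = (\<integral>s. H (b + s) * \<rho> s \<partial>lborel)" for b
      unfolding u_def V_def using lborel_integral_real_affine[of 1 "\<lambda>y. H y * \<rho> (y - b)" b] by simp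
    have rint: "integrable lborel \<rho>" using sch_integrable[OF \<rho>, of 0] by simp
    have rpos: "0 \<le> \<rho> t" for t by (simp add: \<rho>_def)
    have rmeas[measurable]: "\<rho> \<in> borel_measurable borel" unfolding \<rho>_def by measurable
    have ubound: "\<bar>u b\<bar> \<le> B * (\<integral>s. \<rho> s \<partial>lborel)" for b
    proof -
      have "\<bar>u b\<bar> \<le> (\<integral>s. B * \<rho> s \<partial>lborel)" unfolding uaff
      proof (rule integral_abs_bound_integral)
        show "integrable lborel (\<lambda>s. H (b + s) * \<rho> s)"
          using Vint[OF \<rho>, of b] lborel_integrable_real_affine[of "\<lambda>y. H y * \<rho> (y - b)" 1 b] by simp
        show "integrable lborel (\<lambda>s. B * \<rho> s)" using rint by simp
        show "\<bar>H (b + s) * \<rho> s\<bar> \<le> B * \<rho> s" for s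
          using HB[of "b + s"] rpos[of s] by (simp add: abs_mult mult_right_mono)
      qed
      then show ?thesis by simp
    qed
    have ulim: "(\<lambda>n. u (b - real n)) \<longlonglongrightarrow> 0" for b
    proof -
      have "(\<lambda>n. \<integral>s. H (b - real n + s) * \<rho> s \<partial>lborel) \<longlonglongrightarrow> (\<integral>s. 0 * \<rho> s \<partial>lborel)"
      proof (rule integral_dominated_convergence[where w="\<lambda>s. B * \<rho> s"])
        show "integrable lborel (\<lambda>s. B * \<rho> s)" using rint by simp
        show "(\<lambda>s. 0 * \<rho> s) \<in> borel_measurable lborel" by simp
        show "(\<lambda>s. H (b - real i + s) * \<rho> s) \<in> borel_measurable lborel" for i
          by measurable
        show "AE s in lborel. norm (H (b - real i + s) * \<rho> s) \<le> B * \<rho> s" for i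
          using HB rpos by (auto simp: abs_mult mult_right_mono)
        show "AE s in lborel. (\<lambda>i. H (b - real i + s) * \<rho> s) \<longlonglongrightarrow> 0 * \<rho> s"
        proof (rule AE_I2)
          fix s
          have "filterlim (\<lambda>i. b - real i + s) at_bot sequentially"
            unfolding filterlim_at_bot
          proof
            fix Z :: real
            obtain N :: nat where N: "b + s - Z < real N" using reals_Archimedean2 by blast
            show "eventually (\<lambda>i. b - real i + s \<le> Z) sequentially"
              unfolding eventually_sequentially
            proof (intro exI allI impI)
              fix i assume "N \<le> i"
              then have "real N \<le> real i" by simp
              then show "b - real i + s \<le> Z" using N by linarith
            qed
          qed
          then have "(\<lambda>i. H (b - real i + s)) \<longlonglongrightarrow> 0" using Hbot by (rule filterlim_compose[rotated])
          then show "(\<lambda>i. H (b - real i + s) * \<rho> s) \<longlonglongrightarrow> 0 * \<rho> s" by (intro tendsto_intros)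
        qed
      qed
      then show ?thesis by (simp add: uaff)
    qed
    have uzero: "u b = 0" for b
    proof (cases m)
      case 0
      have "u b = (\<integral>y. H y * (deriv ^^ m) (\<lambda>y. \<rho> (y - b)) y \<partial>lborel)"
        unfolding u_def V_def 0 by simp
      also have "\<dots> = 0" by (rule Z[OF sch_transl[OF \<rho>]])
      finally show ?thesis .
    next
      case (Suc j)
      have nz: "(nab 1 ^^ Suc j) u b' = 0" for b'
      proof -
        have s: "(Tp 1 ^^ m) \<rho> \<in> schwartz" using Tp_pow_sch[OF \<rho>] by simp
        have "(nab 1 ^^ m) u b' = V ((Dl 1 ^^ m) \<rho>) b'" unfolding u_def by (simp add: VDlpow[OF \<rho>])
        also have "\<dots> = (\<integral>y. H y * (deriv ^^ m) ((Tp 1 ^^ m) \<rho>) (y - b') \<partial>lborel)"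
          unfolding V_def by (simp add: Tp_pow_deriv[OF \<rho>])
        also have "\<dots> = (\<integral>y. H y * (deriv ^^ m) (\<lambda>y. (Tp 1 ^^ m) \<rho> (y - b')) y \<partial>lborel)"
          by (simp add: sch_transl_deriv[OF s])
        also have "\<dots> = 0" by (rule Z[OF sch_transl[OF s]])
        finally show ?thesis using Suc by simp
      qed
      have per: "nab 1 u b' = 0" for b' by (rule fd[OF ubound nz])
      have "u b = u (b - real n)" for n
      proof (induction n)
        case 0 then show ?case by simp
      next
        case (Suc n)
        have "nab 1 u (b - real (Suc n)) = 0" by (rule per)
        then show ?case using Suc by (simp add: nab_def algebra_simps)
      qed
      then have "(\<lambda>n. u b) \<longlonglongrightarrow> 0" using ulim[of b] by simp
      then show ?thesis by (simp add: LIMSEQ_const_iff)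
    qed
    show ?thesis using uzero[of a] by (simp add: uaff \<rho>_def)
  qed
  (* approximate identity *)
  define g where "g = (\<lambda>r::real. exp (- r\<^sup>2))"
  have g: "g \<in> schwartz" unfolding g_def using gauss_schwartz[of 1] by simp
  have gint: "integrable lborel g" using sch_integrable[OF g, of 0] by simp
  have gpos: "0 \<le> g r" for r by (simp add: g_def)
  have gmeas[measurable]: "g \<in> borel_measurable borel" unfolding g_def by measurable
  have seq0: "(\<integral>r. H (x0 + r / real (Suc k)) * g r \<partial>lborel) = 0" for k
  proof -
    define c where "c = (real (Suc k))\<^sup>2"
    have c: "0 < c" by (simp add: c_def)
    have "0 = (\<integral>s. H (x0 + s) * exp (- c * s\<^sup>2) \<partial>lborel)" using key[OF c] by simp
    also have "\<dots> = \<bar>1 / real (Suc k)\<bar> * (\<integral>r. H (x0 + r / real (Suc k)) * exp (- c * (r / real (Suc k))\<^sup>2) \<partial>lborel)"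
      using lborel_integral_real_affine[of "1 / real (Suc k)" "\<lambda>s. H (x0 + s) * exp (- c * s\<^sup>2)" 0] by simp
    also have "(\<lambda>r. exp (- c * (r / real (Suc k))\<^sup>2)) = g"
      by (auto simp: g_def c_def power_divide)
    finally show ?thesis by simp
  qed
  have "(\<lambda>k. \<integral>r. H (x0 + r / real (Suc k)) * g r \<partial>lborel) \<longlonglongrightarrow> (\<integral>r. H x0 * g r \<partial>lborel)"
  proof (rule integral_dominated_convergence[where w="\<lambda>r. B * g r"])
    show "integrable lborel (\<lambda>r. B * g r)" using gint by simp
    show "(\<lambda>r. H x0 * g r) \<in> borel_measurable lborel" by measurable
    show "(\<lambda>r. H (x0 + r / real (Suc i)) * g r) \<in> borel_measurable lborel" for i
      by measurable
    show "AE r in lborel. norm (H (x0 + r / real (Suc i)) * g r) \<le> B * g r" for i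
      using HB gpos by (auto simp: abs_mult mult_right_mono)
    show "AE r in lborel. (\<lambda>i. H (x0 + r / real (Suc i)) * g r) \<longlonglongrightarrow> H x0 * g r"
    proof (rule AE_I2)
      fix r
      have r0: "(\<lambda>i. r / real (Suc i)) \<longlonglongrightarrow> 0"
        using tendsto_mult[OF tendsto_const[of r] LIMSEQ_inverse_real_of_nat] by (simp add: divide_inverse)
      have "(\<lambda>i. x0 + r / real (Suc i)) \<longlonglongrightarrow> x0" using tendsto_add[OF tendsto_const[of x0] r0] by simp
      moreover have "isCont H x0" using Hc by (simp add: continuous_on_eq_continuous_at)
      ultimately have "(\<lambda>i. H (x0 + r / real (Suc i))) \<longlonglongrightarrow> H x0" by (rule isCont_tendsto_compose[rotated])
      then show "(\<lambda>i. H (x0 + r / real (Suc i)) * g r) \<longlonglongrightarrow> H x0 * g r" by (intro tendsto_intros)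
    qed
  qed
  then have "H x0 * (\<integral>r. g r \<partial>lborel) = 0" using seq0 by (simp add: LIMSEQ_const_iff)
  moreover have "0 < (\<integral>r. g r \<partial>lborel)"
  proof -
    have "sqrt pi / 2 = (\<integral>r. indicator {0..} r * g r \<partial>lborel)"
      using has_bochner_integral_integral_eq[OF gaussian_moment_0] by (simp add: g_def)
    also have "\<dots> \<le> (\<integral>r. g r \<partial>lborel)"
    proof (rule integral_mono)
      show "integrable lborel (\<lambda>r. indicator {0..} r * g r)" using int_ind[OF gint, of "{0..}"] by simp
      show "integrable lborel g" by (rule gint)
      show "indicator {0..} r * g r \<le> g r" for r using gpos[of r] by (simp add: indicator_def)
    qed
    finally have "sqrt pi / 2 \<le> (\<integral>r. g r \<partial>lborel)" .
    moreover have "0 < sqrt pi / 2" by simp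
    ultimately show ?thesis by linarith
  qed
  ultimately show ?thesis by simp
qed




lemma sch_top0:
  assumes "\<phi> \<in> schwartz"
  shows "((deriv ^^ k) \<phi> \<longlongrightarrow> 0) at_top"
proof -
  obtain B where B: "\<forall>x. \<bar>x\<bar> ^ 1 * \<bar>(deriv ^^ k) \<phi> x\<bar> \<le> B" using sch_bound[OF assms] by blast
  have lim: "((\<lambda>x::real. B * inverse x) \<longlongrightarrow> 0) at_top"
    by (intro tendsto_mult_right_zero tendsto_inverse_0_at_top filterlim_ident)
  have ev: "eventually (\<lambda>x. \<bar>(deriv ^^ k) \<phi> x\<bar> \<le> B * inverse x) at_top"
    using eventually_gt_at_top[of 0]
  proof eventually_elim
    fix x :: real assume "0 < x"
    then show "\<bar>(deriv ^^ k) \<phi> x\<bar> \<le> B * inverse x" using B[rule_format, of x]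
      by (simp add: field_simps)
  qed
  show ?thesis
  proof (rule tendsto_sandwich[of "\<lambda>x. - (B * inverse x)" _ _ "\<lambda>x. B * inverse x"])
    show "eventually (\<lambda>x. - (B * inverse x) \<le> (deriv ^^ k) \<phi> x) at_top" using ev by eventually_elim auto
    show "eventually (\<lambda>x. (deriv ^^ k) \<phi> x \<le> B * inverse x) at_top" using ev by eventually_elim auto
    show "((\<lambda>x. - (B * inverse x)) \<longlongrightarrow> 0) at_top" using tendsto_minus[OF lim] by simp
  qed (rule lim)
qed

lemma tail_integral:
  assumes "\<phi> \<in> schwartz"
  shows "(\<integral>x. indicator {y..} x * (deriv ^^ Suc n) \<phi> x \<partial>lborel) = - (deriv ^^ n) \<phi> y"
proof -
  let ?p = "(deriv ^^ n) \<phi>" and ?q = "(deriv ^^ Suc n) \<phi>"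
  have qi: "integrable lborel ?q" by (rule sch_integrable[OF assms])
  have "(\<lambda>k. \<integral>x. indicator {y..y + real k} x * ?q x \<partial>lborel) \<longlonglongrightarrow> (\<integral>x. indicator {y..} x * ?q x \<partial>lborel)"
  proof (rule integral_dominated_convergence[where w="\<lambda>x. \<bar>?q x\<bar>"])
    show "integrable lborel (\<lambda>x. \<bar>?q x\<bar>)" using qi by auto
    show "(\<lambda>x. indicator {y..} x * ?q x) \<in> borel_measurable lborel" using sch_meas[OF assms] by measurable
    show "(\<lambda>x. indicator {y..y + real i} x * ?q x) \<in> borel_measurable lborel" for i
      using sch_meas[OF assms] by measurable
    show "AE x in lborel. norm (indicator {y..y + real i} x * ?q x) \<le> \<bar>?q x\<bar>" for i
      by (auto simp: indicator_def)
    show "AE x in lborel. (\<lambda>i. indicator {y..y + real i} x * ?q x) \<longlonglongrightarrow> indicator {y..} x * ?q x"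
    proof (rule AE_I2)
      fix x
      obtain N :: nat where N: "x - y < real N" using reals_Archimedean2 by blast
      have "eventually (\<lambda>i. indicator {y..y + real i} x * ?q x = indicator {y..} x * ?q x) sequentially"
        unfolding eventually_sequentially
      proof (intro exI allI impI)
        fix i assume "N \<le> i"
        then have "real N \<le> real i" by simp
        then show "indicator {y..y + real i} x * ?q x = indicator {y..} x * ?q x"
          using N by (auto simp: indicator_def)
      qed
      then show "(\<lambda>i. indicator {y..y + real i} x * ?q x) \<longlonglongrightarrow> indicator {y..} x * ?q x"
        by (rule tendsto_eventually)
    qed
  qed
  moreover have "(\<integral>x. indicator {y..y + real k} x * ?q x \<partial>lborel) = ?p (y + real k) - ?p y" for k
  proof -
    have "(\<integral>x. indicator {y..y + real k} x *\<^sub>R ?q x \<partial>lborel) = ?p (y + real k) - ?p y"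
    proof (rule integral_FTC_atLeastAtMost)
      show "continuous_on {y..y + real k} ?q" using sch_cont_on[OF assms] by (rule continuous_on_subset) auto
      show "(?p has_vector_derivative ?q x) (at x within {y..y + real k})" for x
        using sch_DERIV[OF assms] by (simp add: has_real_derivative_iff_has_vector_derivative[symmetric] has_field_derivative_at_within)
    qed simp
    then show ?thesis by simp
  qed
  moreover have "(\<lambda>k. ?p (y + real k) - ?p y) \<longlonglongrightarrow> 0 - ?p y"
  proof (intro tendsto_diff tendsto_const)
    have "filterlim (\<lambda>k. y + real k) at_top sequentially"
      by (rule filterlim_tendsto_add_at_top[OF tendsto_const filterlim_real_sequentially])
    then show "(\<lambda>k. ?p (y + real k)) \<longlonglongrightarrow> 0" using sch_top0[OF assms] by (rule filterlim_compose[rotated])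
  qed
  ultimately show ?thesis using LIMSEQ_unique by fastforce
qed

lemma ibp:
  assumes F: "integrable lborel F" and \<phi>: "\<phi> \<in> schwartz"
  shows "(\<integral>x. anti F x * (deriv ^^ Suc n) \<phi> x \<partial>lborel) = - (\<integral>y. F y * (deriv ^^ n) \<phi> y \<partial>lborel)"
proof -
  let ?p = "(deriv ^^ n) \<phi>" and ?q = "(deriv ^^ Suc n) \<phi>"
  have qi: "integrable lborel ?q" by (rule sch_integrable[OF \<phi>])
  have [measurable]: "F \<in> borel_measurable borel" using F by auto
  have [measurable]: "?q \<in> borel_measurable borel" by (rule sch_meas[OF \<phi>])
  define f where "f y x = (if y \<le> x then F y * ?q x else 0)" for y x
  have fm[measurable]: "(\<lambda>(y, x). f y x) \<in> borel_measurable (lborel \<Otimes>\<^sub>M lborel)"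
    unfolding f_def by measurable
  have gint: "integrable (lborel \<Otimes>\<^sub>M lborel) (\<lambda>(y, x). \<bar>F y\<bar> * \<bar>?q x\<bar>)"
  proof (rule lborel_pair.Fubini_integrable)
    show "(\<lambda>(y, x). \<bar>F y\<bar> * \<bar>?q x\<bar>) \<in> borel_measurable (lborel \<Otimes>\<^sub>M lborel)" by measurable
    have "(\<lambda>y. \<integral>x. norm (case (y, x) of (y, x) \<Rightarrow> \<bar>F y\<bar> * \<bar>?q x\<bar>) \<partial>lborel) = (\<lambda>y. \<bar>F y\<bar> * (\<integral>x. \<bar>?q x\<bar> \<partial>lborel))"
      by (simp add: abs_mult)
    then show "integrable lborel (\<lambda>y. \<integral>x. norm (case (y, x) of (y, x) \<Rightarrow> \<bar>F y\<bar> * \<bar>?q x\<bar>) \<partial>lborel)"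
      using F by simp
    show "AE y in lborel. integrable lborel (\<lambda>x. case (y, x) of (y, x) \<Rightarrow> \<bar>F y\<bar> * \<bar>?q x\<bar>)"
      using qi by auto
  qed
  have fint: "integrable (lborel \<Otimes>\<^sub>M lborel) (\<lambda>(y, x). f y x)"
    by (rule Bochner_Integration.integrable_bound[OF gint fm]) (auto simp: f_def abs_mult)
  have "(\<integral>x. (\<integral>y. f y x \<partial>lborel) \<partial>lborel) = (\<integral>y. (\<integral>x. f y x \<partial>lborel) \<partial>lborel)"
    by (rule lborel_pair.Fubini_integral[OF fint])
  moreover have "(\<integral>y. f y x \<partial>lborel) = anti F x * ?q x" for x
  proof -
    have "(\<integral>y. f y x \<partial>lborel) = (\<integral>y. indicator {..x} y * F y * ?q x \<partial>lborel)"
      by (rule Bochner_Integration.integral_cong) (auto simp: f_def indicator_def)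
    then show ?thesis unfolding anti_def by simp
  qed
  moreover have "(\<integral>x. f y x \<partial>lborel) = F y * (- ?p y)" for y
  proof -
    have "(\<integral>x. f y x \<partial>lborel) = (\<integral>x. F y * (indicator {y..} x * ?q x) \<partial>lborel)"
      by (rule Bochner_Integration.integral_cong) (auto simp: f_def indicator_def)
    then have "(\<integral>x. f y x \<partial>lborel) = F y * (\<integral>x. indicator {y..} x * ?q x \<partial>lborel)"
      by simp
    then show ?thesis using tail_integral[OF \<phi>] by simp
  qed
  ultimately show ?thesis by simp
qed




lemma int_sch_mult:
  assumes F: "integrable lborel F" and \<phi>: "\<phi> \<in> schwartz"
  shows "integrable lborel (\<lambda>x. F x * (deriv ^^ k) \<phi> x)"
proof -
  obtain B where B: "\<forall>x. \<bar>x\<bar> ^ 0 * \<bar>(deriv ^^ k) \<phi> x\<bar> \<le> B" using sch_bound[OF \<phi>] by blast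
  show ?thesis
  proof (rule Bochner_Integration.integrable_bound[of _ "\<lambda>x. B * F x"])
    show "integrable lborel (\<lambda>x. B * F x)" using F by simp
    show "(\<lambda>x. F x * (deriv ^^ k) \<phi> x) \<in> borel_measurable lborel" using F sch_meas[OF \<phi>] by measurable
    show "AE x in lborel. norm (F x * (deriv ^^ k) \<phi> x) \<le> norm (B * F x)"
    proof (rule AE_I2)
      fix x
      have "\<bar>(deriv ^^ k) \<phi> x\<bar> \<le> \<bar>B\<bar>" using B[rule_format, of x] by simp
      then have "\<bar>F x\<bar> * \<bar>(deriv ^^ k) \<phi> x\<bar> \<le> \<bar>F x\<bar> * \<bar>B\<bar>" by (rule mult_left_mono) simp
      then show "norm (F x * (deriv ^^ k) \<phi> x) \<le> norm (B * F x)" by (simp add: abs_mult mult.commute)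
    qed
  qed
qed

lemma Bc_bounded:
  assumes "F \<in> Bc"
  shows "\<exists>B. \<forall>x. \<bar>F x\<bar> \<le> B"
proof -
  from assms obtain l where c: "continuous_on UNIV F" and t: "(F \<longlongrightarrow> l) at_top" and b: "(F \<longlongrightarrow> 0) at_bot"
    by (auto simp: Bc_def)
  have "eventually (\<lambda>x. dist (F x) l < 1) at_top" using t by (rule tendstoD) simp
  then obtain M1 where M1: "\<And>x. x \<ge> M1 \<Longrightarrow> dist (F x) l < 1" by (auto simp: eventually_at_top_linorder)
  have "eventually (\<lambda>x. dist (F x) 0 < 1) at_bot" using b by (rule tendstoD) simp
  then obtain M2 where M2: "\<And>x. x \<le> M2 \<Longrightarrow> dist (F x) 0 < 1" by (auto simp: eventually_at_bot_linorder)
  have "bounded (F ` {M2..M1})"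
    by (rule compact_imp_bounded[OF compact_continuous_image[OF continuous_on_subset[OF c] compact_Icc]]) auto
  then obtain B where B0: "\<forall>x\<in>{M2..M1}. \<bar>F x\<bar> \<le> B" by (auto simp: bounded_iff)
  then have B: "\<And>x. x \<in> {M2..M1} \<Longrightarrow> \<bar>F x\<bar> \<le> B" by blast
  show ?thesis
  proof (intro exI allI)
    fix x
    show "\<bar>F x\<bar> \<le> \<bar>B\<bar> + \<bar>l\<bar> + 1"
    proof (cases "x \<ge> M1")
      case True then show ?thesis using M1[of x] by (auto simp: dist_real_def)
    next
      case False
      show ?thesis
      proof (cases "x \<le> M2")
        case True then show ?thesis using M2[of x] by (auto simp: dist_real_def)
      next
        case False2: False
        then show ?thesis using B[of x] False by auto
      qed
    qed
  qed
qed

lemma Bc_meas[measurable]: "F \<in> Bc \<Longrightarrow> F \<in> borel_measurable borel"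
  by (auto simp: Bc_def intro: borel_measurable_continuous_onI)

lemma Bc_int:
  assumes "F \<in> Bc" "\<phi> \<in> schwartz"
  shows "integrable lborel (\<lambda>x. F x * (deriv ^^ k) \<phi> x)"
proof -
  obtain B where "\<forall>x. \<bar>F x\<bar> \<le> B" using Bc_bounded[OF assms(1)] by blast
  then show ?thesis using sch_integrable_mult[OF assms(2) Bc_meas[OF assms(1)]] by blast
qed

lemma Bc_diff: assumes "F \<in> Bc" "G \<in> Bc" shows "(\<lambda>x. F x - G x) \<in> Bc"
proof -
  obtain l1 where 1: "continuous_on UNIV F" "(F \<longlongrightarrow> l1) at_top" "(F \<longlongrightarrow> 0) at_bot" using assms(1) by (auto simp: Bc_def)
  obtain l2 where 2: "continuous_on UNIV G" "(G \<longlongrightarrow> l2) at_top" "(G \<longlongrightarrow> 0) at_bot" using assms(2) by (auto simp: Bc_def)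
  have "continuous_on UNIV (\<lambda>x. F x - G x)" using 1(1) 2(1) by (rule continuous_on_diff)
  moreover have "((\<lambda>x. F x - G x) \<longlongrightarrow> l1 - l2) at_top" using 1(2) 2(2) by (rule tendsto_diff)
  moreover have "((\<lambda>x. F x - G x) \<longlongrightarrow> 0 - 0) at_bot" using 1(3) 2(3) by (rule tendsto_diff)
  ultimately show ?thesis unfolding Bc_def by auto
qed

lemma distD_diff:
  assumes "F \<in> Bc" "G \<in> Bc"
  shows "distD m (\<lambda>x. F x - G x) = (\<lambda>\<phi>. distD m F \<phi> - distD m G \<phi>)"
proof
  fix \<phi>
  show "distD m (\<lambda>x. F x - G x) \<phi> = distD m F \<phi> - distD m G \<phi>"
  proof (cases "\<phi> \<in> schwartz")
    case True
    have "(\<integral>x. (F x - G x) * (deriv ^^ m) \<phi> x \<partial>lborel) =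
          (\<integral>x. F x * (deriv ^^ m) \<phi> x - G x * (deriv ^^ m) \<phi> x \<partial>lborel)"
      by (simp add: algebra_simps)
    also have "\<dots> = (\<integral>x. F x * (deriv ^^ m) \<phi> x \<partial>lborel) - (\<integral>x. G x * (deriv ^^ m) \<phi> x \<partial>lborel)"
      by (rule Bochner_Integration.integral_diff) (auto intro: Bc_int assms True)
    finally have X: "(\<integral>x. (F x - G x) * (deriv ^^ m) \<phi> x \<partial>lborel) = (\<integral>x. F x * (deriv ^^ m) \<phi> x \<partial>lborel) - (\<integral>x. G x * (deriv ^^ m) \<phi> x \<partial>lborel)" .
    show ?thesis unfolding distD_def if_P[OF True] X by (simp add: right_diff_distrib)
  qed (simp add: distD_def)
qed

lemma uniq_Bc:
  assumes F: "F \<in> Bc" and G: "G \<in> Bc" and eq: "distD m F = distD m G"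
  shows "F = G"
proof -
  have H: "(\<lambda>x. F x - G x) \<in> Bc" by (rule Bc_diff[OF F G])
  obtain B where B: "\<forall>x. \<bar>F x - G x\<bar> \<le> B" using Bc_bounded[OF H] by blast
  have "F x - G x = 0" for x
  proof (rule uniq[where m=m and H="\<lambda>x. F x - G x" and B=B])
    show "continuous_on UNIV (\<lambda>x. F x - G x)" using H by (simp add: Bc_def)
    show "\<bar>F x - G x\<bar> \<le> B" for x using B by blast
    show "((\<lambda>x. F x - G x) \<longlongrightarrow> 0) at_bot" using H by (simp add: Bc_def)
    fix \<phi> :: "real \<Rightarrow> real" assume \<phi>: "\<phi> \<in> schwartz"
    have "distD m (\<lambda>x. F x - G x) \<phi> = 0" using distD_diff[OF F G, of m] eq by simp
    then show "(\<integral>x. (F x - G x) * (deriv ^^ m) \<phi> x \<partial>lborel) = 0"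
      using \<phi> by (simp add: distD_def)
  qed
  then show ?thesis by auto
qed

lemma distD_anti:
  assumes F: "integrable lborel F"
  shows "distD (Suc n) (anti F) = distD n F"
proof
  fix \<phi>
  show "distD (Suc n) (anti F) \<phi> = distD n F \<phi>"
  proof (cases "\<phi> \<in> schwartz")
    case True
    show ?thesis unfolding distD_def if_P[OF True] ibp[OF F True] by simp
  qed (simp add: distD_def)
qed

lemma norm_Ac_eq:
  assumes "F \<in> Bc"
  shows "norm_Ac m (distD m F) = (SUP x. \<bar>F x\<bar>)"
proof -
  have ex: "\<exists>G. G \<in> Bc \<and> distD m F = distD m G" using assms by blast
  define G where "G = (SOME G. G \<in> Bc \<and> distD m F = distD m G)"
  have "G \<in> Bc \<and> distD m F = distD m G" unfolding G_def by (rule someI_ex[OF ex])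
  then have "G = F" using uniq_Bc[OF _ assms] by metis
  then show ?thesis by (simp add: norm_Ac_def G_def Let_def)
qed

lemma norm_L1n_ex:
  assumes "f \<in> L1n n"
  shows "\<exists>F. integrable lborel F \<and> f = distD n F \<and> norm_L1n n f = (\<integral>x. \<bar>F x\<bar> \<partial>lborel)"
proof -
  have ex: "\<exists>F. integrable lborel F \<and> f = distD n F" using assms by (auto simp: L1n_def)
  define F where "F = (SOME F. integrable lborel F \<and> f = distD n F)"
  have "integrable lborel F \<and> f = distD n F" unfolding F_def by (rule someI_ex[OF ex])
  then show ?thesis by (auto simp: norm_L1n_def F_def Let_def)
qed

lemma L1n_sub: "L1n n \<subseteq> Ac (Suc n)"
proof
  fix f assume "f \<in> L1n n"
  then obtain F where F: "integrable lborel F" "f = distD n F" by (auto simp: L1n_def)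
  have "anti F \<in> Bc \<and> f = distD (Suc n) (anti F)" using anti_Bc[OF F(1)] distD_anti[OF F(1)] F(2) by simp
  then show "f \<in> Ac (Suc n)" unfolding Ac_def by blast
qed

lemma L1n_zero: "(\<lambda>\<phi>. 0) \<in> L1n n"
proof -
  have "distD n (\<lambda>x. 0) = (\<lambda>\<phi>. 0)" by (rule ext) (simp add: distD_def)
  then have "integrable lborel (\<lambda>x::real. 0::real) \<and> (\<lambda>\<phi>. 0) = distD n (\<lambda>x. 0)" by simp
  then show ?thesis unfolding L1n_def by blast
qed

lemma L1n_add:
  assumes "f \<in> L1n n" "g \<in> L1n n"
  shows "(\<lambda>\<phi>. f \<phi> + g \<phi>) \<in> L1n n"
proof -
  obtain F G where F: "integrable lborel F" "f = distD n F" and G: "integrable lborel G" "g = distD n G"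
    using assms by (auto simp: L1n_def)
  have "(\<lambda>\<phi>. f \<phi> + g \<phi>) = distD n (\<lambda>x. F x + G x)"
  proof
    fix \<phi>
    show "f \<phi> + g \<phi> = distD n (\<lambda>x. F x + G x) \<phi>"
    proof (cases "\<phi> \<in> schwartz")
      case True
      have "(\<integral>x. (F x + G x) * (deriv ^^ n) \<phi> x \<partial>lborel) =
            (\<integral>x. F x * (deriv ^^ n) \<phi> x + G x * (deriv ^^ n) \<phi> x \<partial>lborel)"
        by (simp add: algebra_simps)
      also have "\<dots> = (\<integral>x. F x * (deriv ^^ n) \<phi> x \<partial>lborel) + (\<integral>x. G x * (deriv ^^ n) \<phi> x \<partial>lborel)"
        by (rule Bochner_Integration.integral_add) (auto intro: int_sch_mult F G True)
      finally have X: "(\<integral>x. (F x + G x) * (deriv ^^ n) \<phi> x \<partial>lborel) = (\<integral>x. F x * (deriv ^^ n) \<phi> x \<partial>lborel) + (\<integral>x. G x * (deriv ^^ n) \<phi> x \<partial>lborel)" .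
      show ?thesis unfolding F(2) G(2) distD_def if_P[OF True] X by (simp add: distrib_left)
    qed (simp add: F(2) G(2) distD_def)
  qed
  moreover have "integrable lborel (\<lambda>x. F x + G x)" using F G by auto
  ultimately show ?thesis by (auto simp: L1n_def)
qed

lemma L1n_scale:
  assumes "f \<in> L1n n"
  shows "(\<lambda>\<phi>. c * f \<phi>) \<in> L1n n"
proof -
  obtain F where F: "integrable lborel F" "f = distD n F" using assms by (auto simp: L1n_def)
  have "(\<lambda>\<phi>. c * f \<phi>) = distD n (\<lambda>x. c * F x)"
    by (rule ext) (simp add: F distD_def mult.assoc)
  moreover have "integrable lborel (\<lambda>x. c * F x)" using F by auto
  ultimately show ?thesis by (auto simp: L1n_def)
qed




definition Gf :: "real \<Rightarrow> real" where
  "Gf x = (sin (pi * x))\<^sup>2 / sqrt (1 + x\<^sup>2)"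

definition Gd :: "real \<Rightarrow> real" where
  "Gd x = 2 * pi * sin (pi * x) * cos (pi * x) / sqrt (1 + x\<^sup>2)
          - (sin (pi * x))\<^sup>2 * x / (sqrt (1 + x\<^sup>2) * (1 + x\<^sup>2))"

lemma sq_pos: "0 < 1 + (x::real)\<^sup>2" by (simp add: add_pos_nonneg)

lemma alg_aux: "(r::real) > 0 \<Longrightarrow> r * r = q \<Longrightarrow>
   (2 * S * (pi * C) * r - S\<^sup>2 * (x / r)) / (r * r) = 2 * pi * S * C / r - S\<^sup>2 * x / (r * q)"
  by (drule sym) (simp add: field_simps power2_eq_square)

lemma Gf_DERIV: "(Gf has_real_derivative Gd x) (at x)"
proof -
  have p: "0 < 1 + x\<^sup>2" by (rule sq_pos)
  have s: "0 < sqrt (1 + x\<^sup>2)" using p by simp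
  have ss: "sqrt (1 + x\<^sup>2) * sqrt (1 + x\<^sup>2) = 1 + x\<^sup>2" using p by simp
  have d1: "((\<lambda>x. (sin (pi * x))\<^sup>2) has_real_derivative 2 * sin (pi * x) * (pi * cos (pi * x))) (at x)"
    by (auto intro!: derivative_eq_intros)
  have d2: "((\<lambda>x. sqrt (1 + x\<^sup>2)) has_real_derivative x / sqrt (1 + x\<^sup>2)) (at x)"
    using p by (auto intro!: derivative_eq_intros simp: field_simps)
  have "(Gf has_real_derivative (2 * sin (pi * x) * (pi * cos (pi * x)) * sqrt (1 + x\<^sup>2) -
          (sin (pi * x))\<^sup>2 * (x / sqrt (1 + x\<^sup>2))) / (sqrt (1 + x\<^sup>2) * sqrt (1 + x\<^sup>2))) (at x)"
    unfolding Gf_def by (rule DERIV_divide[OF d1 d2]) (use s in simp)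
  moreover have "(2 * sin (pi * x) * (pi * cos (pi * x)) * sqrt (1 + x\<^sup>2) -
          (sin (pi * x))\<^sup>2 * (x / sqrt (1 + x\<^sup>2))) / (sqrt (1 + x\<^sup>2) * sqrt (1 + x\<^sup>2)) = Gd x"
    unfolding Gd_def by (rule alg_aux[OF s ss])
  ultimately show ?thesis by simp
qed

lemma Gd_cont: "continuous_on UNIV Gd"
  unfolding Gd_def using sq_pos
  by (intro continuous_intros) (auto simp: add_nonneg_eq_0_iff)

lemma Gf_cont: "continuous_on UNIV Gf"
  using Gf_DERIV by (meson DERIV_isCont continuous_at_imp_continuous_on)




lemma Gf_nonneg: "0 \<le> Gf x" by (simp add: Gf_def)

lemma Gf_bound: "Gf x \<le> inverse (sqrt (1 + x\<^sup>2))"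
proof -
  have "(sin (pi * x))\<^sup>2 \<le> 1" by (simp add: abs_square_le_1)
  moreover have "0 < sqrt (1 + x\<^sup>2)" using sq_pos by simp
  ultimately show ?thesis unfolding Gf_def by (simp add: divide_right_mono field_simps)
qed

lemma inv_sqrt_le1: "inverse (sqrt (1 + x\<^sup>2)) \<le> 1"
proof -
  have "1 \<le> sqrt (1 + x\<^sup>2)" by simp
  then show ?thesis by (simp add: inverse_le_1_iff)
qed

lemma inv_sqrt_le_abs: "x \<noteq> 0 \<Longrightarrow> inverse (sqrt (1 + x\<^sup>2)) \<le> inverse \<bar>x\<bar>"
proof -
  assume "x \<noteq> 0"
  have "sqrt (x\<^sup>2) \<le> sqrt (1 + x\<^sup>2)" by (rule real_sqrt_le_mono) simp
  then have "\<bar>x\<bar> \<le> sqrt (1 + x\<^sup>2)" by simp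
  then show ?thesis using \<open>x \<noteq> 0\<close> by (intro le_imp_inverse_le) auto
qed

lemma Gf_even: "Gf (- x) = Gf x" by (simp add: Gf_def)

lemma Gf_nat: "Gf (real k) = 0" by (simp add: Gf_def)
lemma Gf_nat_neg: "Gf (- real k) = 0" by (simp add: Gf_def)

lemma Gf_half: "Gf (real k + 1/2) = inverse (sqrt (1 + (real k + 1/2)\<^sup>2))"
proof -
  have "sin (pi * (real k + 1/2)) = sin (pi * real k + pi / 2)"
    by (simp only: distrib_left) (simp only: times_divide_eq_right mult_1_right)
  also have "\<dots> = cos (pi * real k)"
    by (simp only: sin_add cos_pi_half sin_pi_half mult_zero_right mult_1_right add_0_left)
  also have "\<dots> = (-1) ^ k" by (rule cos_npi2)
  finally have e: "sin (pi * (real k + 1/2)) = (-1) ^ k" .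
  have s2: "(sin (pi * (real k + 1/2)))\<^sup>2 = 1" unfolding e power2_eq_square by (rule minus_one_mult_self)
  show ?thesis unfolding Gf_def s2 by (simp only: inverse_eq_divide)
qed

lemma Gf_top: "(Gf \<longlongrightarrow> 0) at_top"
proof (rule tendsto_sandwich[of "\<lambda>x. 0" _ _ "\<lambda>x. inverse x"])
  show "eventually (\<lambda>x. 0 \<le> Gf x) at_top" by (simp add: Gf_nonneg)
  show "eventually (\<lambda>x. Gf x \<le> inverse x) at_top"
    using eventually_gt_at_top[of 0]
  proof eventually_elim
    fix x :: real assume "0 < x"
    then show "Gf x \<le> inverse x" using Gf_bound[of x] inv_sqrt_le_abs[of x] by simp
  qed
  show "((\<lambda>x::real. inverse x) \<longlongrightarrow> 0) at_top" by (rule tendsto_inverse_0_at_top[OF filterlim_ident])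
qed simp

lemma Gf_bot: "(Gf \<longlongrightarrow> 0) at_bot"
  unfolding filterlim_at_bot_mirror using Gf_top by (simp add: Gf_even)

lemma Gf_Bc: "Gf \<in> Bc"
  unfolding Bc_def using Gf_cont Gf_top Gf_bot by blast

definition aa :: "nat \<Rightarrow> real" where "aa k = Gf (real k + 1/2)"

lemma aa_unbounded: "\<not> (\<forall>K. (\<Sum>k<K. aa k) \<le> M)"
proof
  assume H: "\<forall>K. (\<Sum>k<K. aa k) \<le> M"
  have sa: "summable aa"
    by (rule summableI_nonneg_bounded[of aa M]) (use H in \<open>auto simp: aa_def Gf_nonneg\<close>)
  have le: "inverse (real k + 2) \<le> aa k" for k
  proof -
    have "sqrt (1 + (real k + 1/2)\<^sup>2) \<le> sqrt ((real k + 2)\<^sup>2)"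
      by (intro real_sqrt_le_mono) (simp add: power2_eq_square algebra_simps)
    also have "\<dots> = real k + 2" by simp
    finally have "sqrt (1 + (real k + 1/2)\<^sup>2) \<le> real k + 2" .
    moreover have "0 < sqrt (1 + (real k + 1/2)\<^sup>2)" using sq_pos by simp
    ultimately show ?thesis unfolding aa_def Gf_half by (intro le_imp_inverse_le) auto
  qed
  have "summable (\<lambda>k. inverse (real k + 2))"
  proof (rule summable_comparison_test'[OF sa, where N=0])
    fix k :: nat show "norm (inverse (real k + 2)) \<le> aa k" using le[of k] by simp
  qed
  then have "summable (\<lambda>k. inverse (real (k + 2)))" by (simp add: add.commute)
  then have "summable (\<lambda>n. inverse (real n))" by (rule summable_iff_shift[THEN iffD1])
  then show False using not_summable_harmonic[where 'a=real] by simp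
qed




definition FK :: "nat \<Rightarrow> real \<Rightarrow> real" where
  "FK K x = indicator {- real K..real K} x * Gd x"

definition GK :: "nat \<Rightarrow> real \<Rightarrow> real" where
  "GK K x = (if \<bar>x\<bar> \<le> real K then Gf x else 0)"

lemma FK_int: "integrable lborel (FK K)"
proof -
  have "set_integrable lborel {- real K..real K} Gd"
    by (rule borel_integrable_atLeastAtMost') (rule continuous_on_subset[OF Gd_cont], simp)
  then show ?thesis by (simp add: set_integrable_def FK_def[abs_def])
qed

lemma anti_FK: "anti (FK K) = GK K"
proof
  fix x
  show "anti (FK K) x = GK K x"
  proof (cases "x < - real K")
    case True
    have "anti (FK K) x = (\<integral>t. (0::real) \<partial>(lborel::real measure))"
      unfolding anti_def by (rule Bochner_Integration.integral_cong) (use True in \<open>auto simp: FK_def indicator_def\<close>)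
    then show ?thesis using True by (simp add: GK_def)
  next
    case False
    define b where "b = min x (real K)"
    have ab: "- real K \<le> b" using False by (simp add: b_def)
    have "anti (FK K) x = (\<integral>t. indicator {- real K..b} t *\<^sub>R Gd t \<partial>lborel)"
      unfolding anti_def by (rule Bochner_Integration.integral_cong) (auto simp: FK_def indicator_def b_def)
    also have "\<dots> = Gf b - Gf (- real K)"
    proof (rule integral_FTC_atLeastAtMost[OF ab])
      show "continuous_on {- real K..b} Gd" by (rule continuous_on_subset[OF Gd_cont]) simp
      show "(Gf has_vector_derivative Gd t) (at t within {- real K..b})" for t
        using Gf_DERIV[of t] by (simp add: has_real_derivative_iff_has_vector_derivative[symmetric] has_field_derivative_at_within)
    qed
    also have "\<dots> = GK K x"
    proof (cases "x \<le> real K")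
      case True then show ?thesis using False by (simp add: b_def GK_def Gf_nat_neg)
    next
      case False2: False then show ?thesis using False by (simp add: b_def GK_def Gf_nat_neg Gf_nat)
    qed
    finally show ?thesis .
  qed
qed

lemma GK_Bc: "GK K \<in> Bc"
  using anti_Bc[OF FK_int] anti_FK by simp

lemma ind_sum_le1: "(\<Sum>k<K. indicator {real k<..real k + 1/2} t) \<le> (1::real)"
proof -
  have "(\<Sum>k<K. indicator {real k<..real k + 1/2} t) = (if \<exists>k<K. t \<in> {real k<..real k + 1/2} then 1 else (0::real))"
  proof (induction K)
    case 0 then show ?case by simp
  next
    case (Suc K)
    show ?case
    proof (cases "t \<in> {real K<..real K + 1/2}")
      case True
      have "\<not> (\<exists>k<K. t \<in> {real k<..real k + 1/2})"
      proof
        assume "\<exists>k<K. t \<in> {real k<..real k + 1/2}"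
        then obtain k where "k < K" "t \<le> real k + 1/2" by auto
        have "real K < t" using True by simp
        have "k + 1 \<le> K" using \<open>k < K\<close> by simp
        then have "real k + 1 \<le> real K" by (metis of_nat_1 of_nat_add of_nat_le_iff)
        then show False using \<open>t \<le> real k + 1/2\<close> \<open>real K < t\<close> by linarith
      qed
      then show ?thesis using Suc True by auto
    next
      case False
      then show ?thesis using Suc by (auto simp: less_Suc_eq)
    qed
  qed
  then show ?thesis by simp
qed

lemma var:
  assumes F: "integrable lborel F"
  shows "(\<Sum>k<K. \<bar>anti F (real k + 1/2) - anti F (real k)\<bar>) \<le> (\<integral>t. \<bar>F t\<bar> \<partial>lborel)"
proof -
  let ?I = "\<lambda>k. {real k<..real k + 1/2}"
  have iI: "integrable lborel (\<lambda>t. indicator (?I k) t * \<bar>F t\<bar>)" for k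
    using int_ind[of "\<lambda>t. \<bar>F t\<bar>" "?I k"] F by auto
  have iF: "integrable lborel (\<lambda>t. indicator (?I k) t * F t)" for k
    by (rule int_ind[OF F]) simp
  have "\<bar>anti F (real k + 1/2) - anti F (real k)\<bar> \<le> (\<integral>t. indicator (?I k) t * \<bar>F t\<bar> \<partial>lborel)" for k
  proof -
    have "anti F (real k + 1/2) - anti F (real k) = (\<integral>t. indicator (?I k) t * F t \<partial>lborel)"
      by (rule anti_diff[OF F]) simp
    also have "\<bar>\<dots>\<bar> \<le> (\<integral>t. indicator (?I k) t * \<bar>F t\<bar> \<partial>lborel)"
    proof (rule integral_abs_bound_integral)
      show "integrable lborel (\<lambda>t. indicator (?I k) t * F t)" by (rule iF)
      show "integrable lborel (\<lambda>t. indicator (?I k) t * \<bar>F t\<bar>)" by (rule iI)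
      show "\<bar>indicator (?I k) t * F t\<bar> \<le> indicator (?I k) t * \<bar>F t\<bar>" for t
        by (simp add: indicator_def)
    qed
    finally show ?thesis .
  qed
  then have "(\<Sum>k<K. \<bar>anti F (real k + 1/2) - anti F (real k)\<bar>) \<le> (\<Sum>k<K. \<integral>t. indicator (?I k) t * \<bar>F t\<bar> \<partial>lborel)"
    by (rule sum_mono)
  also have "\<dots> = (\<integral>t. (\<Sum>k<K. indicator (?I k) t * \<bar>F t\<bar>) \<partial>lborel)"
    by (rule Bochner_Integration.integral_sum[symmetric]) (rule iI)
  also have "\<dots> \<le> (\<integral>t. \<bar>F t\<bar> \<partial>lborel)"
  proof (rule integral_mono)
    show "integrable lborel (\<lambda>t. \<Sum>k<K. indicator (?I k) t * \<bar>F t\<bar>)" by (intro Bochner_Integration.integrable_sum iI)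
    show "integrable lborel (\<lambda>t. \<bar>F t\<bar>)" using F by auto
    fix t
    have "(\<Sum>k<K. indicator (?I k) t * \<bar>F t\<bar>) = (\<Sum>k<K. indicator (?I k) t) * \<bar>F t\<bar>"
      by (simp add: sum_distrib_right)
    also have "\<dots> \<le> 1 * \<bar>F t\<bar>" by (rule mult_right_mono[OF ind_sum_le1]) simp
    finally show "(\<Sum>k<K. indicator (?I k) t * \<bar>F t\<bar>) \<le> \<bar>F t\<bar>" by simp
  qed
  finally show ?thesis .
qed




lemma GK_dist: "distD n (FK K) = distD (Suc n) (GK K)"
  using distD_anti[OF FK_int, of n K] anti_FK[of K] by simp

lemma sum_aa_le:
  assumes F: "integrable lborel F" and A: "anti F = GK K \<or> anti F = Gf"
  shows "(\<Sum>k<K. aa k) \<le> (\<integral>t. \<bar>F t\<bar> \<partial>lborel)"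
proof -
  have "(\<Sum>k<K. aa k) = (\<Sum>k<K. \<bar>anti F (real k + 1/2) - anti F (real k)\<bar>)"
  proof (rule sum.cong[OF refl])
    fix k assume "k \<in> {..<K}"
    then have kK: "real k + 1/2 \<le> real K" "real k \<le> real K"
      by (auto simp: of_nat_less_iff[symmetric] simp del: of_nat_less_iff)
    have "anti F (real k + 1/2) = aa k \<and> anti F (real k) = 0"
      using A kK by (auto simp: GK_def aa_def Gf_nat)
    then show "aa k = \<bar>anti F (real k + 1/2) - anti F (real k)\<bar>"
      by (simp add: aa_def Gf_nonneg)
  qed
  also have "\<dots> \<le> (\<integral>t. \<bar>F t\<bar> \<partial>lborel)" by (rule var[OF F])
  finally show ?thesis .
qed

theorem mainTheorem17:
  fixes n :: nat
  shows "L1n n \<subseteq> Ac (Suc n)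
    \<and> (\<lambda>\<phi>. 0) \<in> L1n n
    \<and> (\<forall>f\<in>L1n n. \<forall>g\<in>L1n n. (\<lambda>\<phi>. f \<phi> + g \<phi>) \<in> L1n n)
    \<and> (\<forall>c::real. \<forall>f\<in>L1n n. (\<lambda>\<phi>. c * f \<phi>) \<in> L1n n)
    \<and> (\<exists>f\<in>Ac (Suc n) - L1n n. \<exists>g::nat \<Rightarrow> ((real \<Rightarrow> real) \<Rightarrow> real).
          (\<forall>k. g k \<in> L1n n) \<and>
          (\<lambda>k. norm_Ac (Suc n) (\<lambda>\<phi>. g k \<phi> - f \<phi>)) \<longlonglongrightarrow> 0)
    \<and> \<not> (\<exists>c C. c > 0 \<and> C > 0 \<and> (\<forall>f\<in>L1n n.
          c * norm_L1n n f \<le> norm_Ac (Suc n) f \<and> norm_Ac (Suc n) f \<le> C * norm_L1n n f))"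
proof (intro conjI)
  show "L1n n \<subseteq> Ac (Suc n)" by (rule L1n_sub)
  show "(\<lambda>\<phi>. 0) \<in> L1n n" by (rule L1n_zero)
  show "\<forall>f\<in>L1n n. \<forall>g\<in>L1n n. (\<lambda>\<phi>. f \<phi> + g \<phi>) \<in> L1n n" using L1n_add by blast
  show "\<forall>c::real. \<forall>f\<in>L1n n. (\<lambda>\<phi>. c * f \<phi>) \<in> L1n n" using L1n_scale by blast
  have gL: "distD n (FK K) \<in> L1n n" for K unfolding L1n_def using FK_int by blast
  show "\<exists>f\<in>Ac (Suc n) - L1n n. \<exists>g::nat \<Rightarrow> ((real \<Rightarrow> real) \<Rightarrow> real).
          (\<forall>k. g k \<in> L1n n) \<and>
          (\<lambda>k. norm_Ac (Suc n) (\<lambda>\<phi>. g k \<phi> - f \<phi>)) \<longlonglongrightarrow> 0"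
  proof (intro bexI exI conjI allI)
    show "distD n (FK k) \<in> L1n n" for k by (rule gL)
    show "distD (Suc n) Gf \<in> Ac (Suc n) - L1n n"
    proof
      show "distD (Suc n) Gf \<in> Ac (Suc n)" unfolding Ac_def using Gf_Bc by blast
      show "distD (Suc n) Gf \<notin> L1n n"
      proof
        assume "distD (Suc n) Gf \<in> L1n n"
        then obtain F where F: "integrable lborel F" "distD (Suc n) Gf = distD n F" by (auto simp: L1n_def)
        have "anti F = Gf"
          by (rule uniq_Bc[OF anti_Bc[OF F(1)] Gf_Bc, of "Suc n"]) (simp add: distD_anti[OF F(1)] F(2))
        then have "\<forall>K. (\<Sum>k<K. aa k) \<le> (\<integral>t. \<bar>F t\<bar> \<partial>lborel)" using sum_aa_le[OF F(1)] by blast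
        then show False using aa_unbounded by blast
      qed
    qed
    define e where "e k = inverse (sqrt (1 + (real k)\<^sup>2))" for k :: nat
    have nrm: "norm_Ac (Suc n) (\<lambda>\<phi>. distD n (FK k) \<phi> - distD (Suc n) Gf \<phi>) = (SUP x. \<bar>GK k x - Gf x\<bar>)" for k
    proof -
      have "(\<lambda>\<phi>. distD n (FK k) \<phi> - distD (Suc n) Gf \<phi>) = distD (Suc n) (\<lambda>x. GK k x - Gf x)"
        unfolding GK_dist distD_diff[OF GK_Bc Gf_Bc] ..
      then show ?thesis using norm_Ac_eq[OF Bc_diff[OF GK_Bc Gf_Bc]] by simp
    qed
    have pt: "\<bar>GK k x - Gf x\<bar> \<le> e k" for k x
    proof (cases "\<bar>x\<bar> \<le> real k")
      case True then show ?thesis by (simp add: GK_def e_def)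
    next
      case False
      then have "(real k)\<^sup>2 \<le> x\<^sup>2" by (metis abs_of_nat abs_le_square_iff linorder_not_le less_imp_le)
      then have "sqrt (1 + (real k)\<^sup>2) \<le> sqrt (1 + x\<^sup>2)" by simp
      then have "inverse (sqrt (1 + x\<^sup>2)) \<le> e k" unfolding e_def
        by (intro le_imp_inverse_le) (auto simp: add_pos_nonneg)
      then show ?thesis using False Gf_bound[of x] Gf_nonneg[of x] by (simp add: GK_def)
    qed
    have bdd: "bdd_above (range (\<lambda>x. \<bar>GK k x - Gf x\<bar>))" for k
      by (rule bdd_aboveI2[where M="e k"]) (rule pt)
    have up: "(SUP x. \<bar>GK k x - Gf x\<bar>) \<le> e k" for k by (rule cSUP_least) (auto intro: pt)
    have lo: "0 \<le> (SUP x. \<bar>GK k x - Gf x\<bar>)" for k by (rule cSUP_upper2[OF bdd[of k], of 0]) auto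
    have e0: "e \<longlonglongrightarrow> 0"
    proof (rule tendsto_sandwich[of "\<lambda>k. 0" _ _ "\<lambda>k. inverse (real k)"])
      show "eventually (\<lambda>k. 0 \<le> e k) sequentially" by (simp add: e_def)
      show "eventually (\<lambda>k. e k \<le> inverse (real k)) sequentially"
        using eventually_gt_at_top[of "0::nat"]
      proof eventually_elim
        fix k :: nat assume "0 < k"
        then show "e k \<le> inverse (real k)" using inv_sqrt_le_abs[of "real k"] by (simp add: e_def)
      qed
      show "(\<lambda>k. inverse (real k)) \<longlonglongrightarrow> 0"
        by (rule tendsto_inverse_0_at_top[OF filterlim_real_sequentially])
    qed simp
    show "(\<lambda>k. norm_Ac (Suc n) (\<lambda>\<phi>. distD n (FK k) \<phi> - distD (Suc n) Gf \<phi>)) \<longlonglongrightarrow> 0"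
      unfolding nrm
      by (rule tendsto_sandwich[OF _ _ tendsto_const e0]) (simp_all add: up lo)
  qed
  show "\<not> (\<exists>c C. c > 0 \<and> C > 0 \<and> (\<forall>f\<in>L1n n.
          c * norm_L1n n f \<le> norm_Ac (Suc n) f \<and> norm_Ac (Suc n) f \<le> C * norm_L1n n f))"
  proof
    assume "\<exists>c C. c > 0 \<and> C > 0 \<and> (\<forall>f\<in>L1n n.
          c * norm_L1n n f \<le> norm_Ac (Suc n) f \<and> norm_Ac (Suc n) f \<le> C * norm_L1n n f)"
    then obtain c where c: "c > 0" and H: "\<And>f. f \<in> L1n n \<Longrightarrow> c * norm_L1n n f \<le> norm_Ac (Suc n) f" by blast
    have "(\<Sum>k<K. aa k) \<le> 1 / c" for K
    proof -
      obtain F where F: "integrable lborel F" "distD n (FK K) = distD n F"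
        and N: "norm_L1n n (distD n (FK K)) = (\<integral>t. \<bar>F t\<bar> \<partial>lborel)"
        using norm_L1n_ex[OF gL[of K]] by metis
      have "anti F = GK K"
        using uniq_Bc[OF anti_Bc[OF F(1)] GK_Bc] distD_anti[OF F(1)] F(2) GK_dist by metis
      then have s: "(\<Sum>k<K. aa k) \<le> norm_L1n n (distD n (FK K))" using sum_aa_le[OF F(1)] N by simp
      have "norm_Ac (Suc n) (distD n (FK K)) = (SUP x. \<bar>GK K x\<bar>)"
        unfolding GK_dist by (rule norm_Ac_eq[OF GK_Bc])
      also have "\<dots> \<le> 1"
      proof (rule cSUP_least)
        fix x show "\<bar>GK K x\<bar> \<le> 1"
          using Gf_bound[of x] inv_sqrt_le1[of x] Gf_nonneg[of x] by (simp add: GK_def)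
      qed simp
      finally have "c * norm_L1n n (distD n (FK K)) \<le> 1" using H[OF gL[of K]] by linarith
      then have "norm_L1n n (distD n (FK K)) \<le> 1 / c" using c by (simp add: field_simps)
      then show ?thesis using s by linarith
    qed
    then show False using aa_unbounded by blast
  qed
qed


end
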